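(* Let $G$ be a strongly contracting group. Then $\mathrm{WP}_G\in\mathrm{DTIME}_*(n)$.
   Context: Automaton groups: an invertible, minimal automaton $A=(S,X,t,o)$ over a finite alphabet $X$ with state set $S$ closed under inversion generates the group $G_A$ of transformations $o(s,\cdot)$ of $X^{*}$; for a word $w\in S^{*}$ and $x\in X$, the section $w|_x\in S^{*}$ is the word of the same length obtained by running the dual automaton: $(s_1\cdots s_n)|_x=s_1'\cdots s_n'$ with $s_i'=t(s_i,x_i)$, $x_1=x$, $x_{i+1}=o(s_i,x_i)$. $l_S$ denotes word length in $G$ w.r.t. $S$. The automaton group is strongly contracting (for that automaton) if $\sum_{x\in X} l_S(w|_x)<|w|$ for all sufficiently long words $w\in S^{*}$; a group is strongly contracting if it is so for some automaton representation. $\mathrm{DTIME}_*(n)$ is the class of languages decided in linear time by a deterministic multi-tape Turing machine. *)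

theory Defs
  imports Main
begin

text \<open>An automaton (S, X, t, o) with finite state type 's and finite alphabet 'x.
  tr = t (transition), outp = o (output).\<close>

fun act :: "('s \<Rightarrow> 'x \<Rightarrow> 's) \<Rightarrow> ('s \<Rightarrow> 'x \<Rightarrow> 'x) \<Rightarrow> 's \<Rightarrow> 'x list \<Rightarrow> 'x list" where
  "act tr outp s [] = []"
| "act tr outp s (x # u) = outp s x # act tr outp (tr s x) u"

text \<open>Action of a word s1...sn of states: s1 acts first.\<close>
definition act_word :: "('s \<Rightarrow> 'x \<Rightarrow> 's) \<Rightarrow> ('s \<Rightarrow> 'x \<Rightarrow> 'x) \<Rightarrow> 's list \<Rightarrow> 'x list \<Rightarrow> 'x list" where
  "act_word tr outp w u = fold (act tr outp) w u"

fun section_word :: "('s \<Rightarrow> 'x \<Rightarrow> 's) \<Rightarrow> ('s \<Rightarrow> 'x \<Rightarrow> 'x) \<Rightarrow> 's list \<Rightarrow> 'x \<Rightarrow> 's list" where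
  "section_word tr outp [] x = []"
| "section_word tr outp (s # w) x = tr s x # section_word tr outp w (outp s x)"

definition len_S :: "('s \<Rightarrow> 'x \<Rightarrow> 's) \<Rightarrow> ('s \<Rightarrow> 'x \<Rightarrow> 'x) \<Rightarrow> 's list \<Rightarrow> nat" where
  "len_S tr outp w = (LEAST n. \<exists>v. length v = n \<and> act_word tr outp v = act_word tr outp w)"

definition invertible_automaton :: "('s \<Rightarrow> 'x \<Rightarrow> 's) \<Rightarrow> ('s \<Rightarrow> 'x \<Rightarrow> 'x) \<Rightarrow> bool" where
  "invertible_automaton tr outp \<longleftrightarrow> (\<forall>s. bij (outp s))"

definition minimal_automaton :: "('s \<Rightarrow> 'x \<Rightarrow> 's) \<Rightarrow> ('s \<Rightarrow> 'x \<Rightarrow> 'x) \<Rightarrow> bool" where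
  "minimal_automaton tr outp \<longleftrightarrow> inj (act tr outp)"

definition inverse_closed_automaton :: "('s \<Rightarrow> 'x \<Rightarrow> 's) \<Rightarrow> ('s \<Rightarrow> 'x \<Rightarrow> 'x) \<Rightarrow> bool" where
  "inverse_closed_automaton tr outp \<longleftrightarrow>
     (\<forall>s. \<exists>s'. \<forall>u. act tr outp s' (act tr outp s u) = u \<and> act tr outp s (act tr outp s' u) = u)"

definition strongly_contracting_automaton :: "('s::finite \<Rightarrow> 'x::finite \<Rightarrow> 's) \<Rightarrow> ('s \<Rightarrow> 'x \<Rightarrow> 'x) \<Rightarrow> bool" where
  "strongly_contracting_automaton tr outp \<longleftrightarrow>
     (\<exists>N. \<forall>w. N \<le> length w \<longrightarrow> (\<Sum>x\<in>UNIV. len_S tr outp (section_word tr outp w x)) < length w)"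

definition word_problem :: "('s \<Rightarrow> 'x \<Rightarrow> 's) \<Rightarrow> ('s \<Rightarrow> 'x \<Rightarrow> 'x) \<Rightarrow> 's list set" where
  "word_problem tr outp = {w. act_word tr outp w = id}"

text \<open>States and tape symbols are natural numbers from finite sets Q and Gamma;
  0 is the blank symbol. Input letters of type 'i are written via an injective
  encoding into Gamma - {0} on tape 0 (positions 0..n-1); all heads start at 0.
  delta q reads the list of the k scanned symbols and returns the new state,
  the k written symbols and the k head moves in {-1,0,1}.\<close>
record 'i tm =
  tm_k :: nat
  tm_Q :: "nat set"
  tm_Gamma :: "nat set"
  tm_enc :: "'i \<Rightarrow> nat"
  tm_start :: nat
  tm_acc :: "nat set"
  tm_rej :: "nat set"
  tm_delta :: "nat \<Rightarrow> nat list \<Rightarrow> nat \<times> nat list \<times> int list"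

definition wf_tm :: "'i tm \<Rightarrow> bool" where
  "wf_tm M \<longleftrightarrow> 1 \<le> tm_k M \<and> finite (tm_Q M) \<and> finite (tm_Gamma M) \<and> 0 \<in> tm_Gamma M
    \<and> inj (tm_enc M) \<and> (\<forall>a. tm_enc M a \<in> tm_Gamma M - {0})
    \<and> tm_start M \<in> tm_Q M \<and> tm_acc M \<subseteq> tm_Q M \<and> tm_rej M \<subseteq> tm_Q M
    \<and> tm_acc M \<inter> tm_rej M = {}
    \<and> (\<forall>q \<in> tm_Q M - (tm_acc M \<union> tm_rej M). \<forall>r. length r = tm_k M \<and> set r \<subseteq> tm_Gamma M \<longrightarrow>
          (case tm_delta M q r of (q', ws, ms) \<Rightarrow>
             q' \<in> tm_Q M \<and> length ws = tm_k M \<and> set ws \<subseteq> tm_Gamma M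
             \<and> length ms = tm_k M \<and> set ms \<subseteq> {-1, 0, 1}))"

type_synonym config = "nat \<times> (int \<Rightarrow> nat) list \<times> int list"

definition tm_step :: "'i tm \<Rightarrow> config \<Rightarrow> config" where
  "tm_step M c = (case c of (q, ts, hs) \<Rightarrow>
     if q \<in> tm_acc M \<union> tm_rej M then c
     else (case tm_delta M q (map (\<lambda>(t, h). t h) (zip ts hs)) of (q', ws, ms) \<Rightarrow>
       (q', map (\<lambda>((t, h), w). t(h := w)) (zip (zip ts hs) ws),
            map (\<lambda>(h, m). h + m) (zip hs ms))))"

definition tm_init :: "'i tm \<Rightarrow> 'i list \<Rightarrow> config" where
  "tm_init M w = (tm_start M,
     (\<lambda>i. if 0 \<le> i \<and> i < int (length w) then tm_enc M (w ! nat i) else 0)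
       # replicate (tm_k M - 1) (\<lambda>_. 0),
     replicate (tm_k M) 0)"

definition decides_in_time :: "'i tm \<Rightarrow> 'i list set \<Rightarrow> (nat \<Rightarrow> nat) \<Rightarrow> bool" where
  "decides_in_time M L T \<longleftrightarrow> (\<forall>w. \<exists>n \<le> T (length w).
     let q = fst ((tm_step M ^^ n) (tm_init M w)) in
     q \<in> tm_acc M \<union> tm_rej M \<and> (q \<in> tm_acc M \<longleftrightarrow> w \<in> L))"

definition DTIME_lin :: "'i list set \<Rightarrow> bool" where
  "DTIME_lin L \<longleftrightarrow> (\<exists>(M :: 'i tm) c. wf_tm M \<and> decides_in_time M L (\<lambda>n. c * n + c))"

end

theory Submission
  imports Defs "HOL-Library.Countable"
begin


fun lt :: "('s \<Rightarrow> 'x \<Rightarrow> 'x) \<Rightarrow> 's list \<Rightarrow> 'x \<Rightarrow> 'x" where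
  "lt outp [] x = x"
| "lt outp (s # w) x = lt outp w (outp s x)"

lemma act_length[simp]: "length (act tr outp s u) = length u"
  by (induction u arbitrary: s) auto

lemma act_word_Nil[simp]: "act_word tr outp w [] = []"
  unfolding act_word_def by (induction w) auto

lemma act_word_Cons: "act_word tr outp w (x # u) = lt outp w x # act_word tr outp (section_word tr outp w x) u"
proof (induction w arbitrary: x u)
  case Nil then show ?case by (simp add: act_word_def)
next
  case (Cons s w) then show ?case by (simp add: act_word_def)
qed

lemma act_word_append: "act_word tr outp (u @ v) = act_word tr outp v \<circ> act_word tr outp u"
  unfolding act_word_def by (rule ext) simp

lemma act_word_empty[simp]: "act_word tr outp [] = id"
  unfolding act_word_def by (rule ext) simp

lemma section_length[simp]: "length (section_word tr outp w x) = length w"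
  by (induction w arbitrary: x) auto

lemma section_append: "section_word tr outp (u @ v) x = section_word tr outp u x @ section_word tr outp v (lt outp u x)"
  by (induction u arbitrary: x) auto

lemma lt_append: "lt outp (u @ v) x = lt outp v (lt outp u x)"
  by (induction u arbitrary: x) auto

lemma section_Nil[simp]: "section_word tr outp [] x = []" by simp

lemma triv_iff: "act_word tr outp w = id \<longleftrightarrow>
   (\<forall>x. lt outp w x = x \<and> act_word tr outp (section_word tr outp w x) = id)"
proof
  assume h: "act_word tr outp w = id"
  show "\<forall>x. lt outp w x = x \<and> act_word tr outp (section_word tr outp w x) = id"
  proof
    fix x
    have "\<And>u. act_word tr outp w (x # u) = x # u" using h by simp
    then have "\<And>u. lt outp w x = x \<and> act_word tr outp (section_word tr outp w x) u = u"
      by (simp add: act_word_Cons)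
    then show "lt outp w x = x \<and> act_word tr outp (section_word tr outp w x) = id"
      by auto
  qed
next
  assume h: "\<forall>x. lt outp w x = x \<and> act_word tr outp (section_word tr outp w x) = id"
  show "act_word tr outp w = id"
  proof
    fix u show "act_word tr outp w u = id u"
      using h by (cases u) (auto simp: act_word_Cons)
  qed
qed

lemma lt_bij: assumes "\<forall>s. bij (outp s)" shows "bij (lt outp w)"
  using assms
proof (induction w)
  case Nil
  show ?case by (simp add: bij_def inj_on_def)
next
  case (Cons s w)
  have "lt outp (s # w) = lt outp w \<circ> outp s" by (rule ext) simp
  then show ?case using Cons bij_comp by metis
qed

lemma len_S_le: "len_S tr outp u \<le> length u"
  unfolding len_S_def by (rule Least_le) auto

definition geo :: "('s \<Rightarrow> 'x \<Rightarrow> 's) \<Rightarrow> ('s \<Rightarrow> 'x \<Rightarrow> 'x) \<Rightarrow> 's list \<Rightarrow> 's list" where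
  "geo tr outp u = (SOME v. length v = len_S tr outp u \<and> act_word tr outp v = act_word tr outp u)"

lemma geo_spec: "length (geo tr outp u) = len_S tr outp u \<and> act_word tr outp (geo tr outp u) = act_word tr outp u"
proof -
  have "\<exists>v. length v = len_S tr outp u \<and> act_word tr outp v = act_word tr outp u"
    unfolding len_S_def by (rule LeastI_ex) auto
  then show ?thesis unfolding geo_def by (rule someI_ex)
qed

lemma geo_len: "length (geo tr outp u) \<le> length u"
  using geo_spec len_S_le by metis

lemma geo_act: "act_word tr outp (geo tr outp u) = act_word tr outp u"
  using geo_spec by metis


locale SC =
  fixes tr :: "'s::finite \<Rightarrow> 'x::finite \<Rightarrow> 's" and outp :: "'s \<Rightarrow> 'x \<Rightarrow> 'x" and N :: nat
  assumes bij_o: "\<And>s. bij (outp s)" and Npos: "0 < N"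
    and contr: "\<And>w. length w = N \<Longrightarrow> (\<Sum>x\<in>UNIV. len_S tr outp (section_word tr outp w x)) < N"
begin

abbreviation "AW \<equiv> act_word tr outp"
abbreviation "SEC \<equiv> section_word tr outp"
abbreviation "GEO \<equiv> geo tr outp"

definition cbstep :: "'s list \<Rightarrow> 's \<Rightarrow> 's list" where
  "cbstep cb s = (if length (cb @ [s]) = N then [] else cb @ [s])"

definition cstep :: "'s list \<times> 'x \<times> 's list \<Rightarrow> 's \<Rightarrow> 's list \<times> 'x \<times> 's list" where
  "cstep st s = (case st of (cb, y, acc) \<Rightarrow> (let b = cb @ [s] in
      if length b = N then ([], lt outp b y, acc @ GEO (SEC b y)) else (b, y, acc)))"

definition F :: "'x \<Rightarrow> 's list \<Rightarrow> 's list \<times> 'x \<times> 's list" where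
  "F x P = fold (\<lambda>s st. cstep st s) P ([], x, [])"

definition C :: "'s list \<Rightarrow> 's list" where
  "C P = fold (\<lambda>s cb. cbstep cb s) P []"

definition Pre :: "'s list \<Rightarrow> 's list" where
  "Pre P = take (length P - length (C P)) P"

lemma F_snoc: "F x (P @ [s]) = cstep (F x P) s"
  unfolding F_def by simp

lemma C_snoc: "C (P @ [s]) = cbstep (C P) s"
  unfolding C_def by simp

lemma C_Nil[simp]: "C [] = []" by (simp add: C_def)
lemma F_Nil[simp]: "F x [] = ([], x, [])" by (simp add: F_def)

lemma C_struct: "length (C P) < N \<and> (\<exists>P1. P = P1 @ C P)"
proof (induction P rule: rev_induct)
  case Nil then show ?case using Npos by simp
next
  case (snoc s P)
  then obtain P1 where P1: "P = P1 @ C P" by blast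
  show ?case
  proof (cases "length (C P @ [s]) = N")
    case True
    then have "C (P @ [s]) = []" by (simp add: C_snoc cbstep_def)
    then show ?thesis using Npos by simp
  next
    case False
    then have "C (P @ [s]) = C P @ [s]" by (simp add: C_snoc cbstep_def)
    moreover have "P @ [s] = P1 @ (C P @ [s])" using P1 by simp
    ultimately show ?thesis using snoc False by (metis le_neq_implies_less length_append_singleton Suc_leI)
  qed
qed

lemma C_len: "length (C P) < N" using C_struct by blast

lemma Pre_C: "P = Pre P @ C P"
proof -
  obtain P1 where P1: "P = P1 @ C P" using C_struct by blast
  then have "Pre P = P1" unfolding Pre_def by (metis append_eq_conv_conj diff_add_inverse2 length_append)
  then show ?thesis using P1 by simp
qed

lemma Pre_snoc: "Pre (P @ [s]) = (if length (C P @ [s]) = N then P @ [s] else Pre P)"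
proof (cases "length (C P @ [s]) = N")
  case True
  then have "C (P @ [s]) = []" by (simp add: C_snoc cbstep_def)
  then show ?thesis using True by (simp add: Pre_def)
next
  case False
  then have c: "C (P @ [s]) = C P @ [s]" by (simp add: C_snoc cbstep_def)
  have "Pre (P @ [s]) = take (length P - length (C P)) (P @ [s])"
    unfolding Pre_def c by simp
  also have "\<dots> = Pre P" unfolding Pre_def by simp
  finally show ?thesis using False by simp
qed

lemma F_inv: "fst (F x P) = C P \<and> fst (snd (F x P)) = lt outp (Pre P) x
   \<and> AW (snd (snd (F x P))) = AW (SEC (Pre P) x) \<and> length (snd (snd (F x P))) \<le> length (Pre P)"
proof (induction P rule: rev_induct)
  case Nil then show ?case by (simp add: Pre_def)
next
  case (snoc s P)
  obtain cb y acc where FP: "F x P = (cb, y, acc)" by (cases "F x P") auto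
  from snoc FP have cb: "cb = C P" and y: "y = lt outp (Pre P) x"
    and acc: "AW acc = AW (SEC (Pre P) x)" and al: "length acc \<le> length (Pre P)" by auto
  show ?case
  proof (cases "length (C P @ [s]) = N")
    case True
    have F2: "F x (P @ [s]) = ([], lt outp (C P @ [s]) y, acc @ GEO (SEC (C P @ [s]) y))"
      using True by (simp add: F_snoc FP cstep_def cb Let_def)
    have C2: "C (P @ [s]) = []" using True by (simp add: C_snoc cbstep_def)
    have P2: "Pre (P @ [s]) = P @ [s]" using True by (simp add: Pre_snoc)
    have e: "P @ [s] = Pre P @ (C P @ [s])" using Pre_C[of P] by simp
    have "lt outp (C P @ [s]) y = lt outp (P @ [s]) x"
      by (subst e) (simp add: lt_append y)
    moreover have "AW (acc @ GEO (SEC (C P @ [s]) y)) = AW (SEC (P @ [s]) x)"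
      by (subst e) (simp add: act_word_append section_append acc geo_act y)
    moreover have "length (acc @ GEO (SEC (C P @ [s]) y)) \<le> length (P @ [s])"
    proof -
      have "length (GEO (SEC (C P @ [s]) y)) \<le> length (C P @ [s])"
        using geo_len[of tr outp "SEC (C P @ [s]) y"] by simp
      moreover have "length (P @ [s]) = length (Pre P) + length (C P @ [s])"
        by (subst e) simp
      ultimately show ?thesis using al by simp
    qed
    ultimately show ?thesis using F2 C2 P2 by simp
  next
    case False
    have F2: "F x (P @ [s]) = (C P @ [s], y, acc)"
      using False by (simp add: F_snoc FP cstep_def cb Let_def)
    have C2: "C (P @ [s]) = C P @ [s]" using False by (simp add: C_snoc cbstep_def)
    have P2: "Pre (P @ [s]) = Pre P" using False by (simp add: Pre_snoc)
    show ?thesis using F2 C2 P2 y acc al by simp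
  qed
qed

lemma sum_bij: "bij g \<Longrightarrow> (\<Sum>x\<in>UNIV. f (g x)) = (\<Sum>y\<in>(UNIV::'x set). f y)" for g :: "'x \<Rightarrow> 'x"
  by (metis bij_betw_def sum.reindex_bij_betw)

lemma F_sum: "N * (\<Sum>x\<in>UNIV. length (snd (snd (F x P)))) \<le> (N - 1) * length (Pre P)"
proof (induction P rule: rev_induct)
  case Nil then show ?case by (simp add: Pre_def)
next
  case (snoc s P)
  show ?case
  proof (cases "length (C P @ [s]) = N")
    case True
    let ?b = "C P @ [s]"
    have F2: "\<And>x. snd (snd (F x (P @ [s]))) = snd (snd (F x P)) @ GEO (SEC ?b (lt outp (Pre P) x))"
    proof -
      fix x
      obtain cb y acc where FP: "F x P = (cb, y, acc)" by (cases "F x P") auto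
      have "cb = C P" "y = lt outp (Pre P) x" using F_inv[of x P] FP by auto
      then show "snd (snd (F x (P @ [s]))) = snd (snd (F x P)) @ GEO (SEC ?b (lt outp (Pre P) x))"
        using True by (simp add: F_snoc FP cstep_def Let_def)
    qed
    have "(\<Sum>x\<in>UNIV. length (GEO (SEC ?b (lt outp (Pre P) x))))
        = (\<Sum>y\<in>UNIV. length (GEO (SEC ?b y)))"
    proof -
      have "bij (lt outp (Pre P))" using lt_bij bij_o by blast
      then show ?thesis by (rule sum_bij)
    qed
    also have "\<dots> = (\<Sum>y\<in>UNIV. len_S tr outp (SEC ?b y))"
      using geo_spec by metis
    also have "\<dots> < N" using contr True by blast
    finally have lt1: "(\<Sum>x\<in>UNIV. length (GEO (SEC ?b (lt outp (Pre P) x)))) \<le> N - 1" by simp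
    have P2: "Pre (P @ [s]) = P @ [s]" using True by (simp add: Pre_snoc)
    have e: "length (P @ [s]) = length (Pre P) + N"
      using Pre_C[of P] True by (metis length_append append_assoc)
    have "N * (\<Sum>x\<in>UNIV. length (snd (snd (F x (P @ [s])))))
        = N * (\<Sum>x\<in>UNIV. length (snd (snd (F x P)))) + N * (\<Sum>x\<in>UNIV. length (GEO (SEC ?b (lt outp (Pre P) x))))"
      by (simp add: F2 sum.distrib algebra_simps)
    also have "\<dots> \<le> (N - 1) * length (Pre P) + N * (N - 1)"
      using snoc lt1 by (meson add_mono mult_le_mono2)
    also have "\<dots> = (N - 1) * length (Pre (P @ [s]))" using P2 e by (simp add: algebra_simps)
    finally show ?thesis .
  next
    case False
    have "\<And>x. snd (snd (F x (P @ [s]))) = snd (snd (F x P))"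
    proof -
      fix x
      obtain cb y acc where FP: "F x P = (cb, y, acc)" by (cases "F x P") auto
      have "cb = C P" using F_inv[of x P] FP by auto
      then show "snd (snd (F x (P @ [s]))) = snd (snd (F x P))"
        using False by (simp add: F_snoc FP cstep_def Let_def)
    qed
    then show ?thesis using snoc False by (simp add: Pre_snoc)
  qed
qed

end


definition sym :: "'s::countable \<Rightarrow> nat" where "sym s = to_nat s + 3"

lemma sym_inj[simp]: "sym a = sym b \<longleftrightarrow> a = b" by (simp add: sym_def)
lemma sym_ne[simp]: "sym a \<noteq> 0" "sym a \<noteq> 1" "sym a \<noteq> 2" by (auto simp: sym_def)

definition encl :: "'s::countable list list \<Rightarrow> nat list" where
  "encl lev = concat (map (\<lambda>u. map sym u @ [1]) lev)"

lemma encl_Nil[simp]: "encl [] = []" by (simp add: encl_def)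
lemma encl_Cons[simp]: "encl (u # lev) = map sym u @ [1] @ encl lev" by (simp add: encl_def)
lemma encl_append[simp]: "encl (a @ b) = encl a @ encl b" by (simp add: encl_def)
lemma encl_concat: "encl (concat ls) = concat (map encl ls)" by (induction ls) auto
lemma length_encl: "length (encl lev) = sum_list (map (\<lambda>u. length u + 1) lev)"
  by (induction lev) auto

context SC
begin

definition out :: "'x \<Rightarrow> 's list \<Rightarrow> 's list" where
  "out x u = (case F x u of (cb, y, acc) \<Rightarrow> acc @ GEO (SEC cb y))"

lemma out_act: "AW (out x u) = AW (SEC u x)"
proof -
  obtain cb y acc where FP: "F x u = (cb, y, acc)" by (cases "F x u") auto
  then have i: "cb = C u" "y = lt outp (Pre u) x" "AW acc = AW (SEC (Pre u) x)"
    using F_inv[of x u] by auto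
  have "AW (SEC u x) = AW (SEC (Pre u @ C u) x)" using Pre_C[of u] by simp
  also have "\<dots> = AW (acc @ GEO (SEC cb y))"
    by (simp add: section_append act_word_append i geo_act)
  finally show ?thesis by (simp add: out_def FP)
qed

lemma out_lt: "lt outp u x = lt outp (fst (F x u)) (fst (snd (F x u)))"
proof -
  have "lt outp u x = lt outp (Pre u @ C u) x" using Pre_C[of u] by simp
  then show ?thesis using F_inv[of x u] by (simp add: lt_append)
qed

definition d :: nat where "d = card (UNIV :: 'x set)"
definition L :: nat where "L = 2 * d * N * N"

lemma d_pos: "0 < d" unfolding d_def by (simp add: finite_UNIV_card_ge_0)

lemma out_sum: "N * (\<Sum>x\<in>UNIV. length (out x u)) \<le> (N - 1) * length (Pre u) + N * d * length (C u)"
proof -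
  have o: "\<And>x. length (out x u) = length (snd (snd (F x u))) + length (GEO (SEC (C u) (fst (snd (F x u)))))"
  proof -
    fix x
    obtain cb y acc where FP: "F x u = (cb, y, acc)" by (cases "F x u") auto
    then have "cb = C u" using F_inv[of x u] by auto
    then show "length (out x u) = length (snd (snd (F x u))) + length (GEO (SEC (C u) (fst (snd (F x u)))))"
      by (simp add: out_def FP)
  qed
  have g: "(\<Sum>x\<in>UNIV. length (GEO (SEC (C u) (fst (snd (F x u)))))) \<le> (\<Sum>x\<in>(UNIV::'x set). length (C u))"
    by (rule sum_mono) (metis geo_len section_length)
  have "N * (\<Sum>x\<in>UNIV. length (out x u)) = N * (\<Sum>x\<in>UNIV. length (snd (snd (F x u))))
      + N * (\<Sum>x\<in>UNIV. length (GEO (SEC (C u) (fst (snd (F x u))))))"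
    by (simp add: o sum.distrib algebra_simps)
  also have "\<dots> \<le> (N - 1) * length (Pre u) + N * (d * length (C u))"
    using F_sum[of u] g by (intro add_mono) (auto simp: d_def)
  finally show ?thesis by (simp add: algebra_simps)
qed

lemma out_bound:
  assumes "L \<le> length u"
  shows "2 * N * (\<Sum>x\<in>UNIV. length (out x u) + 1) \<le> (2 * N - 1) * (length u + 1)"
proof -
  define S where "S = (\<Sum>x\<in>UNIV. length (out x u))"
  define p where "p = length (Pre u)"
  define r where "r = length (C u)"
  have m: "length u = p + r" unfolding p_def r_def using Pre_C[of u] by (metis length_append)
  have rN: "r \<le> N - 1" unfolding r_def using C_len[of u] by simp
  have NS: "N * S \<le> (N - 1) * p + N * d * r" using out_sum unfolding S_def p_def r_def .
  have s1: "(\<Sum>x\<in>(UNIV::'x set). length (out x u) + 1) = S + d"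
    unfolding sum.distrib by (simp add: S_def d_def)
  have "2 * N * (S + d) = 2 * (N * S) + 2 * N * d" by (simp add: algebra_simps)
  also have "\<dots> \<le> 2 * ((N - 1) * p + N * d * r) + 2 * N * d" using NS by simp
  also have "\<dots> \<le> 2 * ((N - 1) * p + N * d * (N - 1)) + 2 * N * d"
    using rN by (simp add: mult_le_mono2)
  also have "\<dots> = 2 * (N - 1) * p + 2 * d * N * N"
    using Npos by (cases N) (auto simp: algebra_simps)
  also have "\<dots> \<le> 2 * (N - 1) * (p + r) + 2 * d * N * N" by simp
  also have "\<dots> \<le> (2 * N - 1) * (p + r + 1)"
  proof -
    have "2 * d * N * N \<le> p + r" using assms m unfolding L_def by simp
    moreover have "(2 * N - 1) * (p + r + 1) = 2 * (N - 1) * (p + r) + (p + r) + (2 * N - 1)"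
      using Npos by (cases N) (auto simp: algebra_simps)
    ultimately show ?thesis by simp
  qed
  finally show ?thesis using s1 m by simp
qed

definition xs :: "'x list" where "xs = (SOME l. distinct l \<and> set l = UNIV)"

lemma xs_prop: "distinct xs \<and> set xs = UNIV"
  unfolding xs_def by (rule someI_ex) (use finite_distinct_list[OF finite_UNIV] in blast)

lemma length_xs: "length xs = d"
  using xs_prop distinct_card unfolding d_def by metis

definition okw :: "'x \<Rightarrow> 's list \<Rightarrow> bool" where
  "okw x u = (if length u < L then AW u = id else lt outp u x = x)"

definition nextw :: "'x \<Rightarrow> 's list list \<Rightarrow> 's list list" where
  "nextw x lev = map (out x) (filter (\<lambda>u. L \<le> length u) lev)"

definition nextlev :: "'s list list \<Rightarrow> 's list list" where
  "nextlev lev = concat (map (\<lambda>x. nextw x lev) xs)"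

lemma word_triv: "AW u = id \<longleftrightarrow> (\<forall>x. okw x u) \<and> (L \<le> length u \<longrightarrow> (\<forall>x. AW (out x u) = id))"
proof -
  have "AW u = id \<longleftrightarrow> (\<forall>x. lt outp u x = x \<and> AW (SEC u x) = id)" by (rule triv_iff)
  then show ?thesis
  proof (cases "length u < L")
    case True then show ?thesis by (simp add: okw_def)
  next
    case False then show ?thesis using triv_iff[of tr outp u] by (auto simp: okw_def out_act)
  qed
qed

lemma lev_triv: "(\<forall>u\<in>set lev. AW u = id) \<longleftrightarrow>
   (\<forall>x. \<forall>u\<in>set lev. okw x u) \<and> (\<forall>v\<in>set (nextlev lev). AW v = id)"
proof -
  have s: "v \<in> set (nextlev lev) \<longleftrightarrow> (\<exists>x u. u \<in> set lev \<and> L \<le> length u \<and> v = out x u)" for v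
    unfolding nextlev_def nextw_def using xs_prop by auto
  show ?thesis
  proof
    assume h: "\<forall>u\<in>set lev. AW u = id"
    then have "\<forall>x. \<forall>u\<in>set lev. okw x u" using word_triv by blast
    moreover have "\<forall>v\<in>set (nextlev lev). AW v = id"
    proof
      fix v assume "v \<in> set (nextlev lev)"
      then obtain x u where "u \<in> set lev" "L \<le> length u" "v = out x u" using s by blast
      then show "AW v = id" using h word_triv by blast
    qed
    ultimately show "(\<forall>x. \<forall>u\<in>set lev. okw x u) \<and> (\<forall>v\<in>set (nextlev lev). AW v = id)" by blast
  next
    assume h: "(\<forall>x. \<forall>u\<in>set lev. okw x u) \<and> (\<forall>v\<in>set (nextlev lev). AW v = id)"
    show "\<forall>u\<in>set lev. AW u = id"
    proof
      fix u assume u: "u \<in> set lev"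
      have "L \<le> length u \<longrightarrow> (\<forall>x. AW (out x u) = id)" using h u s by blast
      then show "AW u = id" using h u word_triv by blast
    qed
  qed
qed

lemma sum_list_swap: "(\<Sum>x\<in>UNIV. sum_list (map (g x) l)) = sum_list (map (\<lambda>u. \<Sum>x\<in>UNIV. g x u) l)"
  for g :: "'x \<Rightarrow> 's list \<Rightarrow> nat"
  by (induction l) (auto simp: sum.distrib)

lemma nextlev_len: "2 * N * length (encl (nextlev lev)) \<le> (2 * N - 1) * length (encl lev)"
proof -
  let ?lg = "filter (\<lambda>u. L \<le> length u) lev"
  have "length (encl (nextlev lev)) = sum_list (map (\<lambda>x. sum_list (map (\<lambda>u. length (out x u) + 1) ?lg)) xs)"
  proof -
    have "length (encl (nextlev lev)) = sum_list (map (\<lambda>x. length (encl (nextw x lev))) xs)"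
      unfolding nextlev_def encl_concat length_concat by (simp add: o_def)
    moreover have "\<And>x. length (encl (nextw x lev)) = sum_list (map (\<lambda>u. length (out x u) + 1) ?lg)"
      unfolding nextw_def length_encl by (simp add: o_def)
    ultimately show ?thesis by simp
  qed
  also have "\<dots> = (\<Sum>x\<in>UNIV. sum_list (map (\<lambda>u. length (out x u) + 1) ?lg))"
    using sum_list_distinct_conv_sum_set[of xs] xs_prop by simp
  also have "\<dots> = sum_list (map (\<lambda>u. \<Sum>x\<in>UNIV. length (out x u) + 1) ?lg)"
    by (rule sum_list_swap)
  finally have e: "length (encl (nextlev lev)) = sum_list (map (\<lambda>u. \<Sum>x\<in>UNIV. length (out x u) + 1) ?lg)" .
  have "2 * N * sum_list (map (\<lambda>u. \<Sum>x\<in>UNIV. length (out x u) + 1) ?lg)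
      \<le> (2 * N - 1) * sum_list (map (\<lambda>u. length u + 1) lev)"
  proof (induction lev)
    case Nil then show ?case by simp
  next
    case (Cons u lev)
    show ?case
    proof (cases "L \<le> length u")
      case True
      let ?a = "\<Sum>x\<in>UNIV. length (out x u) + 1"
      let ?r = "sum_list (map (\<lambda>u. \<Sum>x\<in>UNIV. length (out x u) + 1) (filter (\<lambda>u. L \<le> length u) lev))"
      let ?r2 = "sum_list (map (\<lambda>u. length u + 1) lev)"
      have "2 * N * (?a + ?r) = 2 * N * ?a + 2 * N * ?r" by (rule distrib_left)
      also have "\<dots> \<le> (2 * N - 1) * (length u + 1) + (2 * N - 1) * ?r2"
        using Cons.IH out_bound[OF True] by (rule_tac add_mono) auto
      also have "\<dots> = (2 * N - 1) * (length u + 1 + ?r2)" by (rule distrib_left[symmetric])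
      finally show ?thesis using True by simp
    next
      case False
      have "(2 * N - 1) * sum_list (map (\<lambda>u. length u + 1) lev) \<le> (2 * N - 1) * sum_list (map (\<lambda>u. length u + 1) (u # lev))"
        by (rule mult_le_mono2) simp
      then show ?thesis using Cons.IH False by simp
    qed
  qed
  then show ?thesis using e by (simp add: length_encl)
qed

end


datatype ('s, 'x) loc = Short "'s list" | Long "'s list" 'x "'s option list" | Flush "'s option list"

datatype ('s, 'x) ast = Init | Copy | CopyEnd | RwA bool nat | RwB bool nat | RwC bool nat
  | Pass bool nat "('s, 'x) loc" | Acc | Rej

instance loc :: (countable, countable) countable by countable_datatype
instance ast :: (countable, countable) countable by countable_datatype

fun role :: "('s, 'x) ast \<Rightarrow> bool" where
  "role (RwA r i) = r" | "role (RwB r i) = r" | "role (RwC r i) = r" | "role (Pass r i l) = r"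
| "role _ = True"

definition symo :: "'s::countable option \<Rightarrow> nat" where
  "symo a = (case a of None \<Rightarrow> 1 | Some s \<Rightarrow> sym s)"

definition dec :: "nat \<Rightarrow> 's::countable" where "dec a = from_nat (a - 3)"

lemma dec_sym[simp]: "dec (sym s) = s" by (simp add: dec_def sym_def)
lemma sym_ge3[simp]: "3 \<le> sym s" by (simp add: sym_def)

fun wr :: "(int \<Rightarrow> nat) \<Rightarrow> int \<Rightarrow> nat list \<Rightarrow> (int \<Rightarrow> nat)" where
  "wr t p [] = t"
| "wr t p (a # l) = wr (t(p := a)) (p + 1) l"

fun holds :: "(int \<Rightarrow> nat) \<Rightarrow> int \<Rightarrow> nat list \<Rightarrow> bool" where
  "holds t p [] = True"
| "holds t p (a # l) = (t p = a \<and> holds t (p + 1) l)"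

lemma wr_append: "wr t p (a @ b) = wr (wr t p a) (p + int (length a)) b"
  by (induction a arbitrary: t p) (auto simp: algebra_simps)

lemma wr_snoc: "wr t p (a @ [c]) = (wr t p a)(p + int (length a) := c)"
  by (simp add: wr_append)

lemma wr_below: "q < p \<Longrightarrow> wr t p l q = t q"
  by (induction l arbitrary: t p) auto

lemma holds_wr: "holds (wr t p l) p l"
proof (induction l arbitrary: t p)
  case Nil then show ?case by simp
next
  case (Cons a l)
  have "wr (t(p := a)) (p + 1) l p = a" by (simp add: wr_below)
  then show ?case using Cons by simp
qed

lemma holds_append: "holds t p (a @ b) \<longleftrightarrow> holds t p a \<and> holds t (p + int (length a)) b"
  by (induction a arbitrary: p) (auto simp: algebra_simps)

context SC
begin

definition adelta :: "('s, 'x) ast \<Rightarrow> nat \<Rightarrow> nat \<Rightarrow> nat \<Rightarrow> ('s, 'x) ast \<times> (nat \<times> nat \<times> nat) \<times> (int \<times> int \<times> int)" where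
  "adelta q r0 rR rW = (case q of
     Init \<Rightarrow> (Copy, (r0, 2, 2), (0, 1, 1))
   | Copy \<Rightarrow> (if r0 = 0 then (CopyEnd, (r0, 1, rW), (0, 1, 0)) else (Copy, (r0, r0, rW), (1, 1, 0)))
   | CopyEnd \<Rightarrow> (RwA True 0, (r0, 2, rW), (0, 0, 0))
   | RwA r i \<Rightarrow> (RwB r i, (r0, rR, rW), (0, -1, 0))
   | RwB r i \<Rightarrow> (if rR = 2 then (Acc, (r0, rR, rW), (0, 0, 0)) else (RwC r i, (r0, rR, rW), (0, -1, 0)))
   | RwC r i \<Rightarrow> (if rR = 2 then (Pass r i (Short []), (r0, rR, rW), (0, 1, 0)) else (RwC r i, (r0, rR, rW), (0, -1, 0)))
   | Pass r i l \<Rightarrow> (case l of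
        Flush [] \<Rightarrow> (Rej, (r0, rR, rW), (0, 0, 0))
      | Flush (ob # oq) \<Rightarrow> (if oq = [] then Pass r i (Short []) else Pass r i (Flush oq), (r0, rR, symo ob), (0, 0, 1))
      | Long cb y (ob # oq) \<Rightarrow> (Pass r i (Long cb y oq), (r0, rR, symo ob), (0, 0, 1))
      | Long cb y [] \<Rightarrow>
          (if 3 \<le> rR then (case cstep (cb, y, []) (dec rR) of (cb', y', acc) \<Rightarrow> Pass r i (Long cb' y' (map Some acc)), (r0, rR, rW), (0, 1, 0))
           else if rR = 1 then (if lt outp cb y = xs ! i then Pass r i (Flush (map Some (GEO (SEC cb y)) @ [None])) else Rej, (r0, rR, rW), (0, 1, 0))
           else (Rej, (r0, rR, rW), (0, 0, 0)))
      | Short wb \<Rightarrow>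
          (if 3 \<le> rR then (if length (wb @ [dec rR]) = L
                 then (case F (xs ! i) (wb @ [dec rR]) of (cb', y', acc) \<Rightarrow> Pass r i (Long cb' y' (map Some acc)))
                 else Pass r i (Short (wb @ [dec rR])), (r0, rR, rW), (0, 1, 0))
           else if rR = 1 then (if AW wb = id then Pass r i (Short []) else Rej, (r0, rR, rW), (0, 1, 0))
           else if rR = 2 then (if Suc i < d then (RwA r (Suc i), (r0, rR, rW), (0, 0, 0))
                                else (RwA (\<not> r) 0, (r0, rR, 2), (0, 1, 0)))
           else (Rej, (r0, rR, rW), (0, 0, 0))))
   | Acc \<Rightarrow> (Acc, (r0, rR, rW), (0, 0, 0))
   | Rej \<Rightarrow> (Rej, (r0, rR, rW), (0, 0, 0)))"

fun lv :: "('s, 'x) loc \<Rightarrow> bool" where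
  "lv (Short wb) = (length wb < L)"
| "lv (Long cb y oq) = (length cb < N \<and> length oq \<le> L)"
| "lv (Flush oq) = (length oq \<le> L + 1)"

fun qv :: "('s, 'x) ast \<Rightarrow> bool" where
  "qv (RwA r i) = (i < d)" | "qv (RwB r i) = (i < d)" | "qv (RwC r i) = (i < d)"
| "qv (Pass r i l) = (i < d \<and> lv l)"
| "qv _ = True"

definition TD :: "nat \<Rightarrow> nat list \<Rightarrow> nat \<times> nat list \<times> int list" where
  "TD n r = (let q = (from_nat n :: ('s, 'x) ast); rl = role q;
     rR = (if rl then r ! 1 else r ! 2); rW = (if rl then r ! 2 else r ! 1) in
     (case adelta q (r ! 0) rR rW of (q', (w0, wR, wW), (m0, mR, mW)) \<Rightarrow>
       (to_nat (if qv q' then q' else Rej),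
        [w0, if rl then wR else wW, if rl then wW else wR],
        [m0, if rl then mR else mW, if rl then mW else mR])))"

definition Gam :: "nat set" where "Gam = {0, 1, 2} \<union> range (sym :: 's \<Rightarrow> nat)"

definition M :: "'s tm" where
  "M = \<lparr> tm_k = 3, tm_Q = to_nat ` Collect (qv :: ('s, 'x) ast \<Rightarrow> bool), tm_Gamma = Gam, tm_enc = sym,
         tm_start = to_nat (Init :: ('s, 'x) ast), tm_acc = {to_nat (Acc :: ('s, 'x) ast)},
         tm_rej = {to_nat (Rej :: ('s, 'x) ast)}, tm_delta = TD \<rparr>"

definition cfg :: "bool \<Rightarrow> ('s, 'x) ast \<Rightarrow> (int \<Rightarrow> nat) \<Rightarrow> int \<Rightarrow> (int \<Rightarrow> nat) \<Rightarrow> int \<Rightarrow> (int \<Rightarrow> nat) \<Rightarrow> int \<Rightarrow> config" where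
  "cfg rl q t0 h0 tR hR tW hW = (to_nat q, if rl then [t0, tR, tW] else [t0, tW, tR],
       if rl then [h0, hR, hW] else [h0, hW, hR])"

lemma cfg_swap: "cfg rl q t0 h0 tR hR tW hW = cfg (\<not> rl) q t0 h0 tW hW tR hR"
  by (simp add: cfg_def)

lemma step_cfg:
  assumes "role q = rl" "q \<noteq> Acc" "q \<noteq> Rej"
    "adelta q (t0 h0) (tR hR) (tW hW) = (q', (w0, wR, wW), (m0, mR, mW))"
  shows "tm_step M (cfg rl q t0 h0 tR hR tW hW) =
     cfg rl (if qv q' then q' else Rej) (t0(h0 := w0)) (h0 + m0) (tR(hR := wR)) (hR + mR) (tW(hW := wW)) (hW + mW)"
proof -
  have na: "to_nat q \<notin> tm_acc M \<union> tm_rej M" using assms by (simp add: M_def)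
  show ?thesis using assms na
    by (cases rl) (simp_all add: tm_step_def cfg_def M_def TD_def)
qed

lemma halt_fix: "fst c = to_nat (Rej :: ('s, 'x) ast) \<Longrightarrow> tm_step M c = c"
  "fst c = to_nat (Acc :: ('s, 'x) ast) \<Longrightarrow> tm_step M c = c"
  by (cases c; simp add: tm_step_def M_def)+

end

context SC
begin

lemma symo_Gam[simp]: "symo (a :: 's option) \<in> Gam" by (cases a) (auto simp: symo_def Gam_def)
lemma sym_Gam[simp]: "sym (s :: 's) \<in> Gam" by (simp add: Gam_def)
lemma Gam012[simp]: "0 \<in> Gam" "1 \<in> Gam" "2 \<in> Gam" "Suc 0 \<in> Gam" by (auto simp: Gam_def)

lemma adelta_props:
  assumes "adelta q r0 rR rW = (q', (w0, wR, wW), (m0, mR, mW))"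
  shows "w0 \<in> insert r0 Gam \<and> wR \<in> insert r0 (insert rR Gam) \<and> wW \<in> insert rW Gam
    \<and> m0 \<in> {-1, 0, 1} \<and> mR \<in> {-1, 0, 1} \<and> mW \<in> {-1, 0, 1}"
proof (cases q)
  case (Pass r i l)
  show ?thesis
  proof (cases l)
    case (Short wb)
    then show ?thesis using assms Pass unfolding adelta_def
      by (simp split: if_splits prod.splits)
  next
    case (Long cb y oq)
    then show ?thesis using assms Pass unfolding adelta_def
      by (cases oq) (simp_all split: if_splits prod.splits, auto)
  next
    case (Flush oq)
    then show ?thesis using assms Pass unfolding adelta_def
      by (cases oq) (simp_all split: if_splits, auto)
  qed
qed (use assms in \<open>auto simp: adelta_def split: if_splits\<close>)

lemma finite_lists_le: "finite {l :: 'a::finite list. length l \<le> n}"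
  using finite_lists_length_le[of "UNIV :: 'a set" n] by simp

lemma finite_lv: "finite (Collect lv)"
proof -
  have "Collect lv \<subseteq> Short ` {wb. length wb \<le> L}
     \<union> (\<lambda>(c, y, oq). Long c y oq) ` ({c. length c \<le> N} \<times> UNIV \<times> {oq. length oq \<le> L})
     \<union> Flush ` {oq. length oq \<le> L + 1}"
  proof
    fix l assume "l \<in> Collect lv"
    then show "l \<in> Short ` {wb. length wb \<le> L}
     \<union> (\<lambda>(c, y, oq). Long c y oq) ` ({c. length c \<le> N} \<times> UNIV \<times> {oq. length oq \<le> L})
     \<union> Flush ` {oq. length oq \<le> L + 1}"
    proof (cases l)
      case (Short wb) then show ?thesis using \<open>l \<in> Collect lv\<close> by simp
    next
      case (Long c y oq)
      then have "l \<in> (\<lambda>(c, y, oq). Long c y oq) ` ({c. length c \<le> N} \<times> UNIV \<times> {oq. length oq \<le> L})"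
        using \<open>l \<in> Collect lv\<close> by (intro image_eqI[where x="(c, y, oq)"]) auto
      then show ?thesis by blast
    next
      case (Flush oq) then show ?thesis using \<open>l \<in> Collect lv\<close> by simp
    qed
  qed
  moreover have "finite (Short ` {wb :: 's list. length wb \<le> L}
     \<union> (\<lambda>(c, y, oq). Long c y oq) ` ({c :: 's list. length c \<le> N} \<times> (UNIV :: 'x set) \<times> {oq :: 's option list. length oq \<le> L})
     \<union> Flush ` {oq. length oq \<le> L + 1})"
    by (intro finite_UnI finite_imageI finite_cartesian_product finite_lists_le finite_UNIV)
  ultimately show ?thesis by (rule finite_subset)
qed

lemma finite_qv: "finite (Collect qv)"
proof -
  have "Collect qv \<subseteq> {Init, Copy, CopyEnd, Acc, Rej}
     \<union> (\<lambda>(r, i). RwA r i) ` (UNIV \<times> {..<d}) \<union> (\<lambda>(r, i). RwB r i) ` (UNIV \<times> {..<d})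
     \<union> (\<lambda>(r, i). RwC r i) ` (UNIV \<times> {..<d}) \<union> (\<lambda>(r, i, l). Pass r i l) ` (UNIV \<times> {..<d} \<times> Collect lv)"
  proof
    fix q assume "q \<in> Collect qv"
    then show "q \<in> {Init, Copy, CopyEnd, Acc, Rej}
     \<union> (\<lambda>(r, i). RwA r i) ` (UNIV \<times> {..<d}) \<union> (\<lambda>(r, i). RwB r i) ` (UNIV \<times> {..<d})
     \<union> (\<lambda>(r, i). RwC r i) ` (UNIV \<times> {..<d}) \<union> (\<lambda>(r, i, l). Pass r i l) ` (UNIV \<times> {..<d} \<times> Collect lv)"
    proof (cases q)
      case (RwA r i) then show ?thesis using \<open>q \<in> Collect qv\<close> by (intro UnI1 UnI2) (rule image_eqI[where x="(r, i)"], auto)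
    next
      case (RwB r i) then show ?thesis using \<open>q \<in> Collect qv\<close> by (intro UnI1 UnI2) (rule image_eqI[where x="(r, i)"], auto)
    next
      case (RwC r i) then show ?thesis using \<open>q \<in> Collect qv\<close> by (intro UnI1 UnI2) (rule image_eqI[where x="(r, i)"], auto)
    next
      case (Pass r i l) then show ?thesis using \<open>q \<in> Collect qv\<close> by (intro UnI2) (rule image_eqI[where x="(r, i, l)"], auto)
    qed auto
  qed
  moreover have "finite ({Init, Copy, CopyEnd, Acc, Rej}
     \<union> (\<lambda>(r, i). RwA r i) ` (UNIV \<times> {..<d}) \<union> (\<lambda>(r, i). RwB r i) ` (UNIV \<times> {..<d})
     \<union> (\<lambda>(r, i). RwC r i) ` (UNIV \<times> {..<d}) \<union> (\<lambda>(r, i, l). Pass r i l) ` ((UNIV :: bool set) \<times> {..<d} \<times> Collect lv))"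
    by (intro finite_UnI finite_imageI finite_cartesian_product finite_lv finite_UNIV finite_lessThan finite.intros)
  ultimately show ?thesis by (rule finite_subset)
qed

lemma wf_M: "wf_tm M"
  unfolding wf_tm_def
proof (intro conjI)
  show "finite (tm_Q M)" using finite_qv by (simp add: M_def)
  show "finite (tm_Gamma M)" by (simp add: M_def Gam_def)
  show "inj (tm_enc M)" by (simp add: M_def inj_def)
  show "\<forall>q\<in>tm_Q M - (tm_acc M \<union> tm_rej M). \<forall>r. length r = tm_k M \<and> set r \<subseteq> tm_Gamma M \<longrightarrow>
       (case tm_delta M q r of (q', ws, ms) \<Rightarrow> q' \<in> tm_Q M \<and> length ws = tm_k M \<and> set ws \<subseteq> tm_Gamma M
          \<and> length ms = tm_k M \<and> set ms \<subseteq> {- 1, 0, 1})"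
  proof (intro ballI allI impI)
    fix n r assume n: "n \<in> tm_Q M - (tm_acc M \<union> tm_rej M)" and r: "length r = tm_k M \<and> set r \<subseteq> tm_Gamma M"
    have r3: "length r = 3" and rg: "r ! 0 \<in> Gam" "r ! 1 \<in> Gam" "r ! 2 \<in> Gam"
      using r by (auto simp: M_def)
    obtain q :: "('s, 'x) ast" where q: "n = to_nat q" using n by (auto simp: M_def)
    let ?rl = "role q"
    let ?rR = "if ?rl then r ! 1 else r ! 2"
    let ?rW = "if ?rl then r ! 2 else r ! 1"
    obtain q' w0 wR wW m0 mR mW where ad: "adelta q (r ! 0) ?rR ?rW = (q', (w0, wR, wW), (m0, mR, mW))"
      by (metis prod_cases3)
    have p: "w0 \<in> Gam" "wR \<in> Gam" "wW \<in> Gam" "m0 \<in> {-1, 0, 1}" "mR \<in> {-1, 0, 1}" "mW \<in> {-1, 0, 1}"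
      using adelta_props[OF ad] rg by auto
    have "tm_delta M n r = (to_nat (if qv q' then q' else Rej),
        [w0, if ?rl then wR else wW, if ?rl then wW else wR],
        [m0, if ?rl then mR else mW, if ?rl then mW else mR])"
      using ad by (simp add: M_def TD_def q)
    then show "case tm_delta M n r of (q', ws, ms) \<Rightarrow> q' \<in> tm_Q M \<and> length ws = tm_k M \<and> set ws \<subseteq> tm_Gamma M
          \<and> length ms = tm_k M \<and> set ms \<subseteq> {- 1, 0, 1}"
      using p by (auto simp: M_def)
  qed
qed (auto simp: M_def Gam_def)

end

context SC
begin

lemma N_le_L: "N \<le> L"
proof -
  have "1 \<le> 2 * d * N" using d_pos Npos by simp
  then have "1 * N \<le> 2 * d * N * N" by (rule mult_le_mono1)
  then show ?thesis by (simp add: L_def)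
qed

lemma L_pos: "0 < L" using N_le_L Npos by simp

lemma cstep_props: "length cb < N \<Longrightarrow> cstep (cb, y, acc) s = (cb', y', acc') \<Longrightarrow>
   length cb' < N \<and> (\<exists>a. acc' = acc @ a \<and> length a \<le> N)"
  unfolding cstep_def Let_def
  by (auto split: if_splits intro!: exI[where x="GEO (SEC (cb @ [s]) y)"]
           simp: geo_len[of tr outp "SEC (cb @ [s]) y", simplified])

lemma fold_cstep_acc: "fold (\<lambda>s st. cstep st s) v (cb, y, acc) =
   (case fold (\<lambda>s st. cstep st s) v (cb, y, []) of (c, z, a) \<Rightarrow> (c, z, acc @ a))"
proof (induction v arbitrary: cb y acc)
  case Nil then show ?case by simp
next
  case (Cons s v)
  show ?case
  proof (cases "length (cb @ [s]) = N")
    case True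
    then show ?thesis using Cons[of "[]" "lt outp (cb @ [s]) y" "acc @ GEO (SEC (cb @ [s]) y)"]
        Cons[of "[]" "lt outp (cb @ [s]) y" "GEO (SEC (cb @ [s]) y)"]
      by (simp add: cstep_def Let_def split: prod.splits)
  next
    case False
    then show ?thesis using Cons[of "cb @ [s]" y acc] Cons[of "cb @ [s]" y "[]"]
      by (simp add: cstep_def Let_def split: prod.splits)
  qed
qed

abbreviation "ST \<equiv> tm_step M"

lemma tE: "i < d \<Longrightarrow> length cb < N \<Longrightarrow> length (a # oq) \<le> L \<Longrightarrow>
  ST (cfg r (Pass r i (Long cb y (a # oq))) t0 h0 tR hR tW hW) = cfg r (Pass r i (Long cb y oq)) t0 h0 tR hR (tW(hW := symo a)) (hW + 1)"
  by (subst step_cfg[where q'="Pass r i (Long cb y oq)"]) (auto simp: fun_upd_idem adelta_def)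

lemma tF: "i < d \<Longrightarrow> length (a # oq) \<le> L + 1 \<Longrightarrow>
  ST (cfg r (Pass r i (Flush (a # oq))) t0 h0 tR hR tW hW) = cfg r (Pass r i (if oq = [] then Short [] else Flush oq)) t0 h0 tR hR (tW(hW := symo a)) (hW + 1)"
  by (subst step_cfg[where q'="Pass r i (if oq = [] then Short [] else Flush oq)"]) (auto simp: fun_upd_idem adelta_def L_pos)

lemma tRL: "i < d \<Longrightarrow> length cb < N \<Longrightarrow> tR hR = sym s \<Longrightarrow> cstep (cb, y, []) s = (cb', y', acc) \<Longrightarrow>
  ST (cfg r (Pass r i (Long cb y [])) t0 h0 tR hR tW hW) = cfg r (Pass r i (Long cb' y' (map Some acc))) t0 h0 tR (hR + 1) tW hW"
proof -
  assume a: "i < d" "length cb < N" "tR hR = sym s" "cstep (cb, y, []) s = (cb', y', acc)"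
  have "length cb' < N \<and> length acc \<le> L" using cstep_props[OF a(2) a(4)] N_le_L by auto
  then show ?thesis using a
    by (subst step_cfg[where q'="Pass r i (Long cb' y' (map Some acc))"]) (auto simp: fun_upd_idem adelta_def)
qed

lemma tSL: "i < d \<Longrightarrow> length cb < N \<Longrightarrow> tR hR = 1 \<Longrightarrow>
  ST (cfg r (Pass r i (Long cb y [])) t0 h0 tR hR tW hW) =
   cfg r (if lt outp cb y = xs ! i then Pass r i (Flush (map Some (GEO (SEC cb y)) @ [None])) else Rej) t0 h0 tR (hR + 1) tW hW"
proof -
  assume a: "i < d" "length cb < N" "tR hR = 1"
  have "length (GEO (SEC cb y)) \<le> L" using geo_len[of tr outp "SEC cb y"] a(2) N_le_L by simp
  then show ?thesis using a
    by (subst step_cfg[where q'="if lt outp cb y = xs ! i then Pass r i (Flush (map Some (GEO (SEC cb y)) @ [None])) else Rej"])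
       (auto simp: fun_upd_idem adelta_def)
qed

lemma tRS1: "i < d \<Longrightarrow> tR hR = sym s \<Longrightarrow> length (wb @ [s]) < L \<Longrightarrow>
  ST (cfg r (Pass r i (Short wb)) t0 h0 tR hR tW hW) = cfg r (Pass r i (Short (wb @ [s]))) t0 h0 tR (hR + 1) tW hW"
  by (subst step_cfg[where q'="Pass r i (Short (wb @ [s]))"]) (auto simp: fun_upd_idem adelta_def)

lemma tRS2: "i < d \<Longrightarrow> tR hR = sym s \<Longrightarrow> length (wb @ [s]) = L \<Longrightarrow> F (xs ! i) (wb @ [s]) = (cb', y', acc) \<Longrightarrow>
  ST (cfg r (Pass r i (Short wb)) t0 h0 tR hR tW hW) = cfg r (Pass r i (Long cb' y' (map Some acc))) t0 h0 tR (hR + 1) tW hW"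
proof -
  assume a: "i < d" "tR hR = sym s" "length (wb @ [s]) = L" "F (xs ! i) (wb @ [s]) = (cb', y', acc)"
  have "length cb' < N \<and> length acc \<le> L"
    using F_inv[of "xs ! i" "wb @ [s]"] C_len[of "wb @ [s]"] a(3,4) Pre_C[of "wb @ [s]"]
    by (metis fst_conv snd_conv le_add1 length_append order_trans)
  then show ?thesis using a
    by (subst step_cfg[where q'="Pass r i (Long cb' y' (map Some acc))"]) (auto simp: fun_upd_idem adelta_def)
qed

lemma tSS: "i < d \<Longrightarrow> tR hR = 1 \<Longrightarrow>
  ST (cfg r (Pass r i (Short wb)) t0 h0 tR hR tW hW) = cfg r (if AW wb = id then Pass r i (Short []) else Rej) t0 h0 tR (hR + 1) tW hW"
  by (subst step_cfg[where q'="if AW wb = id then Pass r i (Short []) else Rej"]) (auto simp: fun_upd_idem adelta_def L_pos)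

lemma tES1: "Suc i < d \<Longrightarrow> tR hR = 2 \<Longrightarrow>
  ST (cfg r (Pass r i (Short wb)) t0 h0 tR hR tW hW) = cfg r (RwA r (Suc i)) t0 h0 tR hR tW hW"
  by (subst step_cfg[where q'="RwA r (Suc i)"]) (auto simp: fun_upd_idem adelta_def)

lemma tES2: "Suc i = d \<Longrightarrow> tR hR = 2 \<Longrightarrow>
  ST (cfg r (Pass r i (Short wb)) t0 h0 tR hR tW hW) = cfg (\<not> r) (RwA (\<not> r) 0) t0 h0 (tW(hW := 2)) hW tR (hR + 1)"
  by (subst step_cfg[where q'="RwA (\<not> r) 0"]) (auto simp: fun_upd_idem adelta_def d_pos cfg_swap[of r])

lemma tRA: "i < d \<Longrightarrow> ST (cfg r (RwA r i) t0 h0 tR hR tW hW) = cfg r (RwB r i) t0 h0 tR (hR - 1) tW hW"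
  by (subst step_cfg[where q'="RwB r i"]) (auto simp: fun_upd_idem adelta_def)

lemma tRB1: "i < d \<Longrightarrow> tR hR = 2 \<Longrightarrow> ST (cfg r (RwB r i) t0 h0 tR hR tW hW) = cfg r Acc t0 h0 tR hR tW hW"
  by (subst step_cfg[where q'="Acc"]) (auto simp: fun_upd_idem adelta_def)

lemma tRB2: "i < d \<Longrightarrow> tR hR \<noteq> 2 \<Longrightarrow> ST (cfg r (RwB r i) t0 h0 tR hR tW hW) = cfg r (RwC r i) t0 h0 tR (hR - 1) tW hW"
  by (subst step_cfg[where q'="RwC r i"]) (auto simp: fun_upd_idem adelta_def)

lemma tRC1: "i < d \<Longrightarrow> tR hR = 2 \<Longrightarrow> ST (cfg r (RwC r i) t0 h0 tR hR tW hW) = cfg r (Pass r i (Short [])) t0 h0 tR (hR + 1) tW hW"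
  by (subst step_cfg[where q'="Pass r i (Short [])"]) (auto simp: fun_upd_idem adelta_def L_pos)

lemma tRC2: "i < d \<Longrightarrow> tR hR \<noteq> 2 \<Longrightarrow> ST (cfg r (RwC r i) t0 h0 tR hR tW hW) = cfg r (RwC r i) t0 h0 tR (hR - 1) tW hW"
  by (subst step_cfg[where q'="RwC r i"]) (auto simp: fun_upd_idem adelta_def)

end

context SC
begin

definition stp :: "nat \<Rightarrow> config \<Rightarrow> config \<Rightarrow> bool" where "stp n c c' \<longleftrightarrow> (ST ^^ n) c = c'"
definition rejw :: "nat \<Rightarrow> config \<Rightarrow> bool" where
  "rejw n c \<longleftrightarrow> (\<exists>k\<le>n. fst ((ST ^^ k) c) = to_nat (Rej :: ('s, 'x) ast))"

lemma stp_0: "stp 0 c c" by (simp add: stp_def)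
lemma stp_1: "ST c = c' \<Longrightarrow> stp 1 c c'" by (simp add: stp_def)
lemma stp_trans: "stp a c c' \<Longrightarrow> stp b c' c'' \<Longrightarrow> stp (a + b) c c''"
  by (simp add: stp_def funpow_add add.commute[of a b])
lemma stp_eq: "stp n c c' \<Longrightarrow> n = m \<Longrightarrow> c' = c'' \<Longrightarrow> stp m c c''" by simp
lemma rej_trans: "stp a c c' \<Longrightarrow> rejw b c' \<Longrightarrow> rejw (a + b) c"
proof -
  assume s: "stp a c c'" and r: "rejw b c'"
  then obtain k where "k \<le> b" "fst ((ST ^^ k) c') = to_nat (Rej :: ('s, 'x) ast)" unfolding rejw_def by blast
  moreover have "(ST ^^ (a + k)) c = (ST ^^ k) c'" using s by (simp add: stp_def funpow_add add.commute[of a k])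
  ultimately show ?thesis unfolding rejw_def by (metis add_le_mono1 add.commute)
qed
lemma rej_now: "fst c = to_nat (Rej :: ('s, 'x) ast) \<Longrightarrow> rejw n c"
  unfolding rejw_def by (rule exI[of _ 0]) simp
lemma rej_mono: "rejw a c \<Longrightarrow> a \<le> b \<Longrightarrow> rejw b c" unfolding rejw_def by (meson order_trans)
lemma fst_cfg[simp]: "fst (cfg r q t0 h0 tR hR tW hW) = to_nat q" by (simp add: cfg_def)

lemma symo_Some[simp]: "symo (Some s) = sym s" by (simp add: symo_def)
lemma symo_comp_Some[simp]: "symo \<circ> Some = sym" by (rule ext) (simp add: symo_def)

lemma map_symo_Some[simp]: "map symo (map Some a) = map sym a"
  by (induction a) (auto simp: symo_def)

lemma drainL: "i < d \<Longrightarrow> length cb < N \<Longrightarrow> length oq \<le> L \<Longrightarrow>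
  stp (length oq) (cfg r (Pass r i (Long cb y oq)) t0 h0 tR hR tW hW)
     (cfg r (Pass r i (Long cb y [])) t0 h0 tR hR (wr tW hW (map symo oq)) (hW + int (length oq)))"
proof (induction oq arbitrary: tW hW)
  case Nil then show ?case by (simp add: stp_0)
next
  case (Cons a oq)
  have 1: "stp 1 (cfg r (Pass r i (Long cb y (a # oq))) t0 h0 tR hR tW hW)
     (cfg r (Pass r i (Long cb y oq)) t0 h0 tR hR (tW(hW := symo a)) (hW + 1))"
    using Cons.prems by (intro stp_1 tE) auto
  have 2: "stp (length oq) (cfg r (Pass r i (Long cb y oq)) t0 h0 tR hR (tW(hW := symo a)) (hW + 1))
     (cfg r (Pass r i (Long cb y [])) t0 h0 tR hR (wr (tW(hW := symo a)) (hW + 1) (map symo oq)) (hW + 1 + int (length oq)))"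
    using Cons by simp
  show ?case by (rule stp_eq[OF stp_trans[OF 1 2]]) (auto simp: algebra_simps)
qed

lemma drainF: "i < d \<Longrightarrow> oq \<noteq> [] \<Longrightarrow> length oq \<le> L + 1 \<Longrightarrow>
  stp (length oq) (cfg r (Pass r i (Flush oq)) t0 h0 tR hR tW hW)
     (cfg r (Pass r i (Short [])) t0 h0 tR hR (wr tW hW (map symo oq)) (hW + int (length oq)))"
proof (induction oq arbitrary: tW hW)
  case Nil then show ?case by simp
next
  case (Cons a oq)
  show ?case
  proof (cases "oq = []")
    case True
    have "stp 1 (cfg r (Pass r i (Flush (a # oq))) t0 h0 tR hR tW hW)
     (cfg r (Pass r i (Short [])) t0 h0 tR hR (tW(hW := symo a)) (hW + 1))"
      using Cons.prems True tF[of i a oq] by (intro stp_1) auto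
    then show ?thesis using True by (simp add: fun_upd_def)
  next
    case False
    have 1: "stp 1 (cfg r (Pass r i (Flush (a # oq))) t0 h0 tR hR tW hW)
       (cfg r (Pass r i (Flush oq)) t0 h0 tR hR (tW(hW := symo a)) (hW + 1))"
      using Cons.prems False tF[of i a oq] by (intro stp_1) auto
    have 2: "stp (length oq) (cfg r (Pass r i (Flush oq)) t0 h0 tR hR (tW(hW := symo a)) (hW + 1))
     (cfg r (Pass r i (Short [])) t0 h0 tR hR (wr (tW(hW := symo a)) (hW + 1) (map symo oq)) (hW + 1 + int (length oq)))"
      using Cons False by simp
    show ?thesis by (rule stp_eq[OF stp_trans[OF 1 2]]) (auto simp: algebra_simps)
  qed
qed

lemma readL: "i < d \<Longrightarrow> length cb < N \<Longrightarrow> length oq \<le> L \<Longrightarrow> holds tR hR (map sym v) \<Longrightarrow>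
  fold (\<lambda>s st. cstep st s) v (cb, y, []) = (cb', y', acc) \<Longrightarrow>
  stp (length oq + length v + length acc) (cfg r (Pass r i (Long cb y oq)) t0 h0 tR hR tW hW)
     (cfg r (Pass r i (Long cb' y' [])) t0 h0 tR (hR + int (length v))
        (wr tW hW (map symo oq @ map sym acc)) (hW + int (length oq) + int (length acc)))"
proof (induction v arbitrary: cb y oq tW hW hR acc cb' y')
  case Nil then show ?case using drainL[of i cb oq] by simp
next
  case (Cons s v)
  obtain c1 y1 a1 where cs: "cstep (cb, y, []) s = (c1, y1, a1)" by (metis prod_cases3)
  have cp: "length c1 < N" "length a1 \<le> N"
    using cstep_props[OF Cons.prems(2) cs] by auto
  obtain c2 y2 a2 where f2: "fold (\<lambda>s st. cstep st s) v (c1, y1, []) = (c2, y2, a2)" by (metis prod_cases3)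
  have "fold (\<lambda>s st. cstep st s) (s # v) (cb, y, []) = (c2, y2, a1 @ a2)"
    using fold_cstep_acc[of v c1 y1 a1] f2 cs by simp
  then have e: "cb' = c2" "y' = y2" "acc = a1 @ a2" using Cons.prems(5) by auto
  have h: "tR hR = sym s" "holds tR (hR + 1) (map sym v)" using Cons.prems(4) by auto
  have 1: "stp (length oq) (cfg r (Pass r i (Long cb y oq)) t0 h0 tR hR tW hW)
     (cfg r (Pass r i (Long cb y [])) t0 h0 tR hR (wr tW hW (map symo oq)) (hW + int (length oq)))"
    using drainL Cons.prems by blast
  have 2: "stp 1 (cfg r (Pass r i (Long cb y [])) t0 h0 tR hR (wr tW hW (map symo oq)) (hW + int (length oq)))
      (cfg r (Pass r i (Long c1 y1 (map Some a1))) t0 h0 tR (hR + 1) (wr tW hW (map symo oq)) (hW + int (length oq)))"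
    by (rule stp_1, rule tRL) (use Cons.prems h cs in auto)
  have 3: "stp (length (map Some a1) + length v + length a2)
      (cfg r (Pass r i (Long c1 y1 (map Some a1))) t0 h0 tR (hR + 1) (wr tW hW (map symo oq)) (hW + int (length oq)))
      (cfg r (Pass r i (Long c2 y2 [])) t0 h0 tR (hR + 1 + int (length v))
        (wr (wr tW hW (map symo oq)) (hW + int (length oq)) (map symo (map Some a1) @ map sym a2))
        (hW + int (length oq) + int (length (map Some a1)) + int (length a2)))"
  proof -
    note IH = Cons.IH[OF Cons.prems(1) cp(1) _ h(2) f2]
    have "length (map Some a1) \<le> L" using cp N_le_L by simp
    from IH[OF this, of "wr tW hW (map symo oq)" "hW + int (length oq)"] show ?thesis by simp
  qed
  show ?case
    by (rule stp_eq[OF stp_trans[OF stp_trans[OF 1 2] 3]]) (auto simp: e wr_append algebra_simps)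
qed

lemma readS: "i < d \<Longrightarrow> holds tR hR (map sym v) \<Longrightarrow> length (wb @ v) < L \<Longrightarrow>
  stp (length v) (cfg r (Pass r i (Short wb)) t0 h0 tR hR tW hW)
     (cfg r (Pass r i (Short (wb @ v))) t0 h0 tR (hR + int (length v)) tW hW)"
proof (induction v arbitrary: wb hR)
  case Nil then show ?case by (simp add: stp_0)
next
  case (Cons s v)
  have 1: "stp 1 (cfg r (Pass r i (Short wb)) t0 h0 tR hR tW hW)
     (cfg r (Pass r i (Short (wb @ [s]))) t0 h0 tR (hR + 1) tW hW)"
    by (rule stp_1, rule tRS1) (use Cons.prems in auto)
  have 2: "stp (length v) (cfg r (Pass r i (Short (wb @ [s]))) t0 h0 tR (hR + 1) tW hW)
     (cfg r (Pass r i (Short (wb @ [s] @ v))) t0 h0 tR (hR + 1 + int (length v)) tW hW)"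
    using Cons.IH[of "hR + 1" "wb @ [s]"] Cons.prems by simp
  show ?case by (rule stp_eq[OF stp_trans[OF 1 2]]) (auto simp: algebra_simps)
qed

end

context SC
begin

lemma F_bounds: "length (fst (F x P)) < N \<and> length (snd (snd (F x P))) \<le> length P"
proof -
  have "length (Pre P) \<le> length P" using Pre_C[of P] by (metis le_add1 length_append)
  then show ?thesis using F_inv[of x P] C_len[of P] by simp
qed

lemma F_append: "F x (P @ v) = (case F x P of (c, y, a) \<Rightarrow>
   (case fold (\<lambda>s st. cstep st s) v (c, y, []) of (c', y', a') \<Rightarrow> (c', y', a @ a')))"
proof -
  obtain c y a where "F x P = (c, y, a)" by (metis prod_cases3)
  then show ?thesis unfolding F_def using fold_cstep_acc[of v c y a] by simp
qed

lemma nextw_single: "encl (nextw x [u]) = (if L \<le> length u then map sym (out x u) @ [1] else [])"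
  by (simp add: nextw_def)

lemma word:
  assumes i: "i < d" and h: "holds tR hR (map sym u @ [1])"
  shows "(okw (xs ! i) u \<longrightarrow> stp (length u + 1 + length (encl (nextw (xs ! i) [u])))
            (cfg r (Pass r i (Short [])) t0 h0 tR hR tW hW)
            (cfg r (Pass r i (Short [])) t0 h0 tR (hR + int (length u) + 1)
               (wr tW hW (encl (nextw (xs ! i) [u]))) (hW + int (length (encl (nextw (xs ! i) [u]))))))
       \<and> (\<not> okw (xs ! i) u \<longrightarrow> rejw (length u + 1 + length (encl (nextw (xs ! i) [u])))
            (cfg r (Pass r i (Short [])) t0 h0 tR hR tW hW))"
proof -
  let ?x = "xs ! i"
  let ?c0 = "cfg r (Pass r i (Short [])) t0 h0 tR hR tW hW"
  have hu: "holds tR hR (map sym u)" and hs: "tR (hR + int (length u)) = 1"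
    using h by (auto simp: holds_append)
  show ?thesis
  proof (cases "length u < L")
    case True
    have ok: "okw ?x u = (AW u = id)" using True by (simp add: okw_def)
    have nw: "encl (nextw ?x [u]) = []" using True by (simp add: nextw_single)
    have 1: "stp (length u) ?c0 (cfg r (Pass r i (Short u)) t0 h0 tR (hR + int (length u)) tW hW)"
      using readS[OF i hu, of "[]"] True by simp
    have 2: "stp 1 (cfg r (Pass r i (Short u)) t0 h0 tR (hR + int (length u)) tW hW)
        (cfg r (if AW u = id then Pass r i (Short []) else Rej) t0 h0 tR (hR + int (length u) + 1) tW hW)"
      by (rule stp_1, rule tSS[where tR=tR and hR="hR + int (length u)"]) (use i hs in auto)
    show ?thesis
    proof (intro conjI impI)
      assume "okw ?x u"
      then show "stp (length u + 1 + length (encl (nextw ?x [u]))) ?c0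
            (cfg r (Pass r i (Short [])) t0 h0 tR (hR + int (length u) + 1)
               (wr tW hW (encl (nextw ?x [u]))) (hW + int (length (encl (nextw ?x [u])))))"
        using stp_trans[OF 1 2] ok nw by simp
    next
      assume "\<not> okw ?x u"
      then have "rejw 0 (cfg r (if AW u = id then Pass r i (Short []) else Rej) t0 h0 tR (hR + int (length u) + 1) tW hW)"
        using ok by (intro rej_now) simp
      then have "rejw (length u + 1 + 0) ?c0" by (rule rej_trans[OF stp_trans[OF 1 2]])
      then show "rejw (length u + 1 + length (encl (nextw ?x [u]))) ?c0" by (rule rej_mono) simp
    qed
  next
    case False
    define u1 where "u1 = take (L - 1) u"
    define s where "s = u ! (L - 1)"
    define u2 where "u2 = drop L u"
    have Lp: "0 < L" by (rule L_pos)
    have ue: "u = u1 @ [s] @ u2" unfolding u1_def s_def u2_def using False Lp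
      by (metis Suc_diff_1 append_take_drop_id hd_drop_conv_nth drop_Suc not_le append_Cons append_Nil
            Cons_nth_drop_Suc diff_less zero_less_one less_le_trans)
    have lu1: "length u1 = L - 1" unfolding u1_def using False by simp
    have lu: "length u = L + length u2" using ue lu1 Lp by simp
    have hu1: "holds tR hR (map sym u1)" and hs1: "tR (hR + int (L - 1)) = sym s"
      and hu2: "holds tR (hR + int (L - 1) + 1) (map sym u2)"
      using hu unfolding ue by (auto simp: holds_append lu1)
    obtain c1 y1 a1 where f1: "F ?x (u1 @ [s]) = (c1, y1, a1)" by (metis prod_cases3)
    have b1: "length c1 < N" "length a1 \<le> L"
      using F_bounds[of ?x "u1 @ [s]"] f1 lu1 Lp by auto
    obtain c2 y2 a2 where f2: "fold (\<lambda>s st. cstep st s) u2 (c1, y1, []) = (c2, y2, a2)" by (metis prod_cases3)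
    have Fu: "F ?x u = (c2, y2, a1 @ a2)" using F_append[of ?x "u1 @ [s]" u2] f1 f2 ue by simp
    have b2: "length c2 < N" using F_bounds[of ?x u] Fu by simp
    have ltu: "lt outp u ?x = lt outp c2 y2" using out_lt[of u ?x] Fu by simp
    define g where "g = GEO (SEC c2 y2)"
    have outu: "out ?x u = (a1 @ a2) @ g" unfolding out_def Fu g_def by simp
    have ok: "okw ?x u = (lt outp c2 y2 = ?x)" using False ltu by (simp add: okw_def)
    have nw: "encl (nextw ?x [u]) = map sym (out ?x u) @ [1]" using False by (simp add: nextw_single)
    have lg: "length g < N" unfolding g_def using geo_len[of tr outp "SEC c2 y2"] b2 by simp
    have 1: "stp (L - 1) ?c0 (cfg r (Pass r i (Short u1)) t0 h0 tR (hR + int (L - 1)) tW hW)"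
      using readS[OF i hu1, of "[]"] lu1 Lp by simp
    have 2: "stp 1 (cfg r (Pass r i (Short u1)) t0 h0 tR (hR + int (L - 1)) tW hW)
       (cfg r (Pass r i (Long c1 y1 (map Some a1))) t0 h0 tR (hR + int (L - 1) + 1) tW hW)"
      by (rule stp_1, rule tRS2[where tR=tR and hR="hR + int (L - 1)" and s=s]) (use i hs1 f1 lu1 Lp in auto)
    have 3: "stp (length a1 + length u2 + length a2)
       (cfg r (Pass r i (Long c1 y1 (map Some a1))) t0 h0 tR (hR + int (L - 1) + 1) tW hW)
       (cfg r (Pass r i (Long c2 y2 [])) t0 h0 tR (hR + int (L - 1) + 1 + int (length u2))
          (wr tW hW (map sym (a1 @ a2))) (hW + int (length a1) + int (length a2)))"
      using readL[OF i b1(1) _ hu2 f2, of "map Some a1" r t0 h0 tW hW] b1 by simp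
    have pe: "hR + int (L - 1) + 1 + int (length u2) = hR + int (length u)" using lu Lp by simp
    let ?tW1 = "wr tW hW (map sym (a1 @ a2))"
    let ?hW1 = "hW + int (length a1) + int (length a2)"
    have 3: "stp (length a1 + length u2 + length a2)
       (cfg r (Pass r i (Long c1 y1 (map Some a1))) t0 h0 tR (hR + int (L - 1) + 1) tW hW)
       (cfg r (Pass r i (Long c2 y2 [])) t0 h0 tR (hR + int (length u)) ?tW1 ?hW1)"
      by (rule stp_eq[OF 3 refl]) (simp only: pe)
    have 4: "stp 1 (cfg r (Pass r i (Long c2 y2 [])) t0 h0 tR (hR + int (length u)) ?tW1 ?hW1)
       (cfg r (if lt outp c2 y2 = ?x then Pass r i (Flush (map Some g @ [None])) else Rej) t0 h0 tR
          (hR + int (length u) + 1) ?tW1 ?hW1)"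
      using tSL[where tR=tR and hR="hR + int (length u)" and cb=c2 and y=y2 and r=r and tW="?tW1" and hW="?hW1", OF i b2 hs] unfolding g_def by (intro stp_1)
    note s123 = stp_trans[OF stp_trans[OF stp_trans[OF 1 2] 3] 4]
    show ?thesis
    proof (intro conjI impI)
      assume okk: "okw ?x u"
      have 5: "stp (length (map Some g @ [None])) (cfg r (Pass r i (Flush (map Some g @ [None]))) t0 h0 tR
          (hR + int (length u) + 1) ?tW1 ?hW1)
         (cfg r (Pass r i (Short [])) t0 h0 tR (hR + int (length u) + 1)
           (wr ?tW1 ?hW1 (map symo (map Some g @ [None]))) (?hW1 + int (length (map Some g @ [None]))))"
        by (rule drainF[OF i]) (use lg N_le_L in auto)
      show "stp (length u + 1 + length (encl (nextw ?x [u]))) ?c0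
            (cfg r (Pass r i (Short [])) t0 h0 tR (hR + int (length u) + 1)
               (wr tW hW (encl (nextw ?x [u]))) (hW + int (length (encl (nextw ?x [u])))))"
        apply (rule stp_eq[OF stp_trans[OF s123[unfolded if_P[OF okk[unfolded ok]]] 5]])
        using okk ok lu Lp apply (simp add: nw outu)
        using okk ok apply (simp add: nw outu wr_append symo_def algebra_simps)
        done
    next
      assume nok: "\<not> okw ?x u"
      have "rejw 0 (cfg r (if lt outp c2 y2 = ?x then Pass r i (Flush (map Some g @ [None])) else Rej) t0 h0 tR
          (hR + int (length u) + 1) ?tW1 ?hW1)"
        using nok ok by (intro rej_now) simp
      from rej_trans[OF s123 this] show "rejw (length u + 1 + length (encl (nextw ?x [u]))) ?c0"
        by (rule rej_mono) (use lu Lp in \<open>simp add: nw outu\<close>)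
    qed
  qed
qed

end

context SC
begin

lemma nextw_Cons: "nextw x (u # lev) = nextw x [u] @ nextw x lev"
  by (simp add: nextw_def)

lemma pass:
  assumes i: "i < d"
  shows "holds tR hR (encl lev) \<Longrightarrow>
     ((\<forall>u\<in>set lev. okw (xs ! i) u) \<longrightarrow> stp (length (encl lev) + length (encl (nextw (xs ! i) lev)))
            (cfg r (Pass r i (Short [])) t0 h0 tR hR tW hW)
            (cfg r (Pass r i (Short [])) t0 h0 tR (hR + int (length (encl lev)))
               (wr tW hW (encl (nextw (xs ! i) lev))) (hW + int (length (encl (nextw (xs ! i) lev))))))
       \<and> (\<not> (\<forall>u\<in>set lev. okw (xs ! i) u) \<longrightarrow> rejw (length (encl lev) + length (encl (nextw (xs ! i) lev)))
            (cfg r (Pass r i (Short [])) t0 h0 tR hR tW hW))"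
proof (induction lev arbitrary: hR tW hW)
  case Nil then show ?case by (simp add: stp_0 nextw_def)
next
  case (Cons u lev)
  let ?x = "xs ! i"
  let ?wo = "encl (nextw ?x [u])"
  let ?ro = "encl (nextw ?x lev)"
  have h1: "holds tR hR (map sym u @ [1])" and h2: "holds tR (hR + int (length u) + 1) (encl lev)"
    using Cons.prems by (auto simp: holds_append algebra_simps)
  note W = word[OF i h1, of r t0 h0 tW hW]
  have eo: "encl (nextw ?x (u # lev)) = ?wo @ ?ro" by (subst nextw_Cons) simp
  show ?case
  proof (cases "okw ?x u")
    case True
    note 1 = W[THEN conjunct1, rule_format, OF True]
    note IH = Cons.IH[OF h2, of "wr tW hW ?wo" "hW + int (length ?wo)"]
    show ?thesis
    proof (intro conjI impI)
      assume a: "\<forall>u\<in>set (u # lev). okw ?x u"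
      have 2: "stp (length (encl lev) + length ?ro)
          (cfg r (Pass r i (Short [])) t0 h0 tR (hR + int (length u) + 1) (wr tW hW ?wo) (hW + int (length ?wo)))
          (cfg r (Pass r i (Short [])) t0 h0 tR (hR + int (length u) + 1 + int (length (encl lev)))
            (wr (wr tW hW ?wo) (hW + int (length ?wo)) ?ro) (hW + int (length ?wo) + int (length ?ro)))"
        using IH a by simp
      show "stp (length (encl (u # lev)) + length (encl (nextw ?x (u # lev))))
            (cfg r (Pass r i (Short [])) t0 h0 tR hR tW hW)
            (cfg r (Pass r i (Short [])) t0 h0 tR (hR + int (length (encl (u # lev))))
               (wr tW hW (encl (nextw ?x (u # lev)))) (hW + int (length (encl (nextw ?x (u # lev))))))"
        by (rule stp_eq[OF stp_trans[OF 1 2]]) (simp_all add: eo wr_append algebra_simps)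
    next
      assume a: "\<not> (\<forall>u\<in>set (u # lev). okw ?x u)"
      then have "rejw (length (encl lev) + length ?ro)
          (cfg r (Pass r i (Short [])) t0 h0 tR (hR + int (length u) + 1) (wr tW hW ?wo) (hW + int (length ?wo)))"
        using IH True by simp
      from rej_trans[OF 1 this]
      show "rejw (length (encl (u # lev)) + length (encl (nextw ?x (u # lev))))
            (cfg r (Pass r i (Short [])) t0 h0 tR hR tW hW)"
        by (rule rej_mono) (simp add: eo)
    qed
  next
    case False
    have "rejw (length u + 1 + length ?wo) (cfg r (Pass r i (Short [])) t0 h0 tR hR tW hW)"
      using W False by blast
    then show ?thesis using False by (auto simp: eo elim!: rej_mono)
  qed
qed

lemma scan: "i < d \<Longrightarrow> tR (s - 1) = 2 \<Longrightarrow> (\<forall>j. s \<le> j \<and> j \<le> s - 1 + int k \<longrightarrow> tR j \<noteq> 2) \<Longrightarrow>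
   stp (k + 1) (cfg r (RwC r i) t0 h0 tR (s - 1 + int k) tW hW) (cfg r (Pass r i (Short [])) t0 h0 tR s tW hW)"
proof (induction k)
  case 0
  have "ST (cfg r (RwC r i) t0 h0 tR (s - 1) tW hW) = cfg r (Pass r i (Short [])) t0 h0 tR (s - 1 + 1) tW hW"
    by (rule tRC1) (use 0 in auto)
  then show ?case by (simp add: stp_def)
next
  case (Suc k)
  have "tR (s - 1 + int (Suc k)) \<noteq> 2" using Suc.prems(3) by simp
  then have 1: "stp 1 (cfg r (RwC r i) t0 h0 tR (s - 1 + int (Suc k)) tW hW) (cfg r (RwC r i) t0 h0 tR (s - 1 + int k) tW hW)"
  proof -
    have e: "s - 1 + int k = s - 1 + int (Suc k) - 1" by simp
    show ?thesis unfolding e by (intro stp_1 tRC2) (use Suc.prems(1) \<open>tR (s - 1 + int (Suc k)) \<noteq> 2\<close> in auto)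
  qed
  have 2: "stp (k + 1) (cfg r (RwC r i) t0 h0 tR (s - 1 + int k) tW hW) (cfg r (Pass r i (Short [])) t0 h0 tR s tW hW)"
    using Suc by simp
  show ?case using stp_trans[OF 1 2] by simp
qed

lemma holds_nth: "holds t p l \<Longrightarrow> j < length l \<Longrightarrow> t (p + int j) = l ! j"
proof (induction l arbitrary: p j)
  case Nil then show ?case by simp
next
  case (Cons a l)
  show ?case
  proof (cases j)
    case 0 then show ?thesis using Cons by simp
  next
    case (Suc n)
    then have "t ((p + 1) + int n) = l ! n" using Cons by simp
    then show ?thesis using Suc by (simp add: algebra_simps)
  qed
qed

lemma encl_no2: "2 \<notin> set (encl lev)" by (induction lev) auto

lemma encl_last0: "lev \<noteq> [] \<Longrightarrow> last (encl lev) = 1"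
proof (induction lev)
  case Nil then show ?case by simp
next
  case (Cons u lev)
  show ?case
  proof (cases "lev = []")
    case True then show ?thesis by simp
  next
    case False
    then have "encl lev \<noteq> []" by (cases lev) auto
    then show ?thesis using Cons False by (simp add: last_append)
  qed
qed

lemma encl_last: "lev \<noteq> [] \<Longrightarrow> encl lev ! (length (encl lev) - 1) = 1"
  using encl_last0[of lev] last_conv_nth[of "encl lev"] by (cases lev) auto

lemma encl_ne: "lev \<noteq> [] \<Longrightarrow> 0 < length (encl lev)" by (cases lev) auto

lemma rewind:
  assumes i: "i < d" and ne: "lev \<noteq> []" and m: "tR (s - 1) = 2" and h: "holds tR s (encl lev)"
  shows "stp (length (encl lev) + 2) (cfg r (RwA r i) t0 h0 tR (s + int (length (encl lev))) tW hW)
     (cfg r (Pass r i (Short [])) t0 h0 tR s tW hW)"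
proof -
  let ?m = "length (encl lev)"
  have mp: "0 < ?m" using encl_ne[OF ne] .
  have 1: "stp 1 (cfg r (RwA r i) t0 h0 tR (s + int ?m) tW hW) (cfg r (RwB r i) t0 h0 tR (s + int (?m - 1)) tW hW)"
  proof -
    have e: "s + int (?m - 1) = s + int ?m - 1" using mp by (simp add: of_nat_diff Suc_le_eq)
    show ?thesis unfolding e by (intro stp_1 tRA[OF i])
  qed
  have lt: "?m - 1 < ?m" using mp by simp
  have "tR (s + int (?m - 1)) = encl lev ! (?m - 1)" by (rule holds_nth[OF h lt])
  also have "\<dots> = 1" by (rule encl_last[OF ne])
  finally have "tR (s + int (?m - 1)) = 1" .
  then have 2: "stp 1 (cfg r (RwB r i) t0 h0 tR (s + int (?m - 1)) tW hW) (cfg r (RwC r i) t0 h0 tR (s - 1 + int (?m - 1)) tW hW)"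
    using tRB2[OF i, of tR "s + int (?m - 1)" r t0 h0 tW hW] by (intro stp_1) (simp add: algebra_simps)
  have nz: "\<forall>j. s \<le> j \<and> j \<le> s - 1 + int (?m - 1) \<longrightarrow> tR j \<noteq> 2"
  proof (intro allI impI)
    fix j assume j: "s \<le> j \<and> j \<le> s - 1 + int (?m - 1)"
    define k where "k = nat (j - s)"
    have jk: "j = s + int k" "k < ?m" using j mp unfolding k_def by auto
    have "tR j = encl lev ! k" using holds_nth[OF h jk(2)] jk(1) by simp
    then show "tR j \<noteq> 2" using encl_no2[of lev] jk(2) by (metis nth_mem)
  qed
  have 3: "stp (?m - 1 + 1) (cfg r (RwC r i) t0 h0 tR (s - 1 + int (?m - 1)) tW hW) (cfg r (Pass r i (Short [])) t0 h0 tR s tW hW)"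
    by (rule scan[OF i m nz])
  show ?thesis using stp_trans[OF stp_trans[OF 1 2] 3] mp by simp
qed

lemma rewind_empty:
  assumes i: "i < d" and m: "tR (s - 1) = 2"
  shows "stp 2 (cfg r (RwA r i) t0 h0 tR s tW hW) (cfg r Acc t0 h0 tR (s - 1) tW hW)"
proof -
  have 1: "stp 1 (cfg r (RwA r i) t0 h0 tR s tW hW) (cfg r (RwB r i) t0 h0 tR (s - 1) tW hW)"
    using tRA[OF i] by (intro stp_1)
  have 2: "stp 1 (cfg r (RwB r i) t0 h0 tR (s - 1) tW hW) (cfg r Acc t0 h0 tR (s - 1) tW hW)"
    by (intro stp_1 tRB1[where tR=tR and hR="s - 1"]) (use i m in auto)
  show ?thesis using stp_trans[OF 1 2] by (simp add: numeral_2_eq_2)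
qed

end

context SC
begin

definition Outs :: "'s list list \<Rightarrow> nat \<Rightarrow> nat list" where
  "Outs lev i = encl (concat (map (\<lambda>x. nextw x lev) (drop i xs)))"

lemma Outs_step: "i < d \<Longrightarrow> Outs lev i = encl (nextw (xs ! i) lev) @ Outs lev (Suc i)"
  unfolding Outs_def using length_xs by (simp add: Cons_nth_drop_Suc[symmetric])

lemma Outs_last: "Outs lev d = []"
  unfolding Outs_def using length_xs by simp

lemma loop:
  assumes ne: "lev \<noteq> []" and m1: "tR (s - 1) = 2" and h: "holds tR s (encl lev)"
    and m2: "tR (s + int (length (encl lev))) = 2"
  shows "i < d \<Longrightarrow>
    ((\<forall>k\<in>{i..<d}. \<forall>u\<in>set lev. okw (xs ! k) u) \<longrightarrow>
      stp ((d - i) * (2 * length (encl lev) + 3) + length (Outs lev i))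
        (cfg r (RwA r i) t0 h0 tR (s + int (length (encl lev))) tW hW)
        (cfg (\<not> r) (RwA (\<not> r) 0) t0 h0 ((wr tW hW (Outs lev i))(hW + int (length (Outs lev i)) := 2))
            (hW + int (length (Outs lev i))) tR (s + int (length (encl lev)) + 1)))
    \<and> (\<not> (\<forall>k\<in>{i..<d}. \<forall>u\<in>set lev. okw (xs ! k) u) \<longrightarrow>
      rejw ((d - i) * (2 * length (encl lev) + 3) + length (Outs lev i))
        (cfg r (RwA r i) t0 h0 tR (s + int (length (encl lev))) tW hW))"
proof (induction "d - Suc i" arbitrary: i tW hW)
  case 0
  let ?m = "length (encl lev)"
  let ?e = "s + int ?m"
  let ?o = "encl (nextw (xs ! i) lev)"
  have di: "Suc i = d" using 0 by simp
  have d1: "d - i = 1" using di by simp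
  have O: "Outs lev i = ?o" using Outs_step[OF 0(2)] Outs_last di by simp
  have 1: "stp (?m + 2) (cfg r (RwA r i) t0 h0 tR ?e tW hW) (cfg r (Pass r i (Short [])) t0 h0 tR s tW hW)"
    by (rule rewind[OF 0(2) ne m1 h])
  note P = pass[OF 0(2) h, of r t0 h0 tW hW]
  have rng: "{i..<d} = {i}" using di by auto
  show ?case
  proof (intro conjI impI)
    assume a: "\<forall>k\<in>{i..<d}. \<forall>u\<in>set lev. okw (xs ! k) u"
    have 2: "stp (?m + length ?o) (cfg r (Pass r i (Short [])) t0 h0 tR s tW hW)
        (cfg r (Pass r i (Short [])) t0 h0 tR ?e (wr tW hW ?o) (hW + int (length ?o)))"
      using P a rng by simp
    have 3: "stp 1 (cfg r (Pass r i (Short [])) t0 h0 tR ?e (wr tW hW ?o) (hW + int (length ?o)))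
       (cfg (\<not> r) (RwA (\<not> r) 0) t0 h0 ((wr tW hW ?o)(hW + int (length ?o) := 2)) (hW + int (length ?o)) tR (?e + 1))"
      by (intro stp_1 tES2 di m2)
    show "stp ((d - i) * (2 * ?m + 3) + length (Outs lev i)) (cfg r (RwA r i) t0 h0 tR ?e tW hW)
        (cfg (\<not> r) (RwA (\<not> r) 0) t0 h0 ((wr tW hW (Outs lev i))(hW + int (length (Outs lev i)) := 2))
            (hW + int (length (Outs lev i))) tR (?e + 1))"
      by (rule stp_eq[OF stp_trans[OF stp_trans[OF 1 2] 3]]) (use di O in simp_all)
  next
    assume a: "\<not> (\<forall>k\<in>{i..<d}. \<forall>u\<in>set lev. okw (xs ! k) u)"
    have "rejw (?m + length ?o) (cfg r (Pass r i (Short [])) t0 h0 tR s tW hW)"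
      using P a rng by simp
    from rej_trans[OF 1 this]
    show "rejw ((d - i) * (2 * ?m + 3) + length (Outs lev i)) (cfg r (RwA r i) t0 h0 tR ?e tW hW)"
      by (rule rej_mono) (simp add: d1 O)
  qed
next
  case (Suc n)
  let ?m = "length (encl lev)"
  let ?e = "s + int ?m"
  let ?o = "encl (nextw (xs ! i) lev)"
  have si: "Suc i < d" using Suc by simp
  have O: "Outs lev i = ?o @ Outs lev (Suc i)" using Outs_step[OF Suc(3)] .
  have 1: "stp (?m + 2) (cfg r (RwA r i) t0 h0 tR ?e tW hW) (cfg r (Pass r i (Short [])) t0 h0 tR s tW hW)"
    by (rule rewind[OF Suc(3) ne m1 h])
  note P = pass[OF Suc(3) h, of r t0 h0 tW hW]
  have rng: "(\<forall>k\<in>{i..<d}. \<forall>u\<in>set lev. okw (xs ! k) u) \<longleftrightarrow>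
      (\<forall>u\<in>set lev. okw (xs ! i) u) \<and> (\<forall>k\<in>{Suc i..<d}. \<forall>u\<in>set lev. okw (xs ! k) u)"
    using Suc(3) by (auto, metis atLeastLessThan_iff le_eq_less_or_eq Suc_leI)
  note IH = Suc(1)[of "Suc i", OF _ si, of "wr tW hW ?o" "hW + int (length ?o)"]
  have nn: "n = d - Suc (Suc i)" using Suc(2) by simp
  have dd: "d - i = Suc (d - Suc i)" using Suc(3) by simp
  show ?case
  proof (cases "\<forall>u\<in>set lev. okw (xs ! i) u")
    case True
    have 2: "stp (?m + length ?o) (cfg r (Pass r i (Short [])) t0 h0 tR s tW hW)
        (cfg r (Pass r i (Short [])) t0 h0 tR ?e (wr tW hW ?o) (hW + int (length ?o)))"
      using P True by simp
    have 3: "stp 1 (cfg r (Pass r i (Short [])) t0 h0 tR ?e (wr tW hW ?o) (hW + int (length ?o)))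
       (cfg r (RwA r (Suc i)) t0 h0 tR ?e (wr tW hW ?o) (hW + int (length ?o)))"
      by (intro stp_1 tES1 si m2)
    note s123 = stp_trans[OF stp_trans[OF 1 2] 3]
    show ?thesis
    proof (intro conjI impI)
      assume a: "\<forall>k\<in>{i..<d}. \<forall>u\<in>set lev. okw (xs ! k) u"
      have 4: "stp ((d - Suc i) * (2 * ?m + 3) + length (Outs lev (Suc i)))
        (cfg r (RwA r (Suc i)) t0 h0 tR ?e (wr tW hW ?o) (hW + int (length ?o)))
        (cfg (\<not> r) (RwA (\<not> r) 0) t0 h0 ((wr (wr tW hW ?o) (hW + int (length ?o)) (Outs lev (Suc i)))(hW + int (length ?o) + int (length (Outs lev (Suc i))) := 2))
            (hW + int (length ?o) + int (length (Outs lev (Suc i)))) tR (?e + 1))"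
        using IH nn a rng by simp
      show "stp ((d - i) * (2 * ?m + 3) + length (Outs lev i)) (cfg r (RwA r i) t0 h0 tR ?e tW hW)
        (cfg (\<not> r) (RwA (\<not> r) 0) t0 h0 ((wr tW hW (Outs lev i))(hW + int (length (Outs lev i)) := 2))
            (hW + int (length (Outs lev i))) tR (?e + 1))"
        by (rule stp_eq[OF stp_trans[OF s123 4]]) (simp_all add: O dd wr_append algebra_simps)
    next
      assume a: "\<not> (\<forall>k\<in>{i..<d}. \<forall>u\<in>set lev. okw (xs ! k) u)"
      have "rejw ((d - Suc i) * (2 * ?m + 3) + length (Outs lev (Suc i)))
        (cfg r (RwA r (Suc i)) t0 h0 tR ?e (wr tW hW ?o) (hW + int (length ?o)))"
        using IH nn a rng True by simp
      from rej_trans[OF s123 this]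
      show "rejw ((d - i) * (2 * ?m + 3) + length (Outs lev i)) (cfg r (RwA r i) t0 h0 tR ?e tW hW)"
        by (rule rej_mono) (simp add: O dd algebra_simps)
    qed
  next
    case False
    have "rejw (?m + length ?o) (cfg r (Pass r i (Short [])) t0 h0 tR s tW hW)"
      using P False by simp
    from rej_trans[OF 1 this]
    have "rejw ((d - i) * (2 * ?m + 3) + length (Outs lev i)) (cfg r (RwA r i) t0 h0 tR ?e tW hW)"
      by (rule rej_mono) (simp add: O dd algebra_simps)
    moreover have "\<not> (\<forall>k\<in>{i..<d}. \<forall>u\<in>set lev. okw (xs ! k) u)" using False rng by blast
    ultimately show ?thesis by blast
  qed
qed

end

context SC
begin

lemma holds_upd_out: "q < p \<or> p + int (length l) \<le> q \<Longrightarrow> holds (t(q := v)) p l = holds t p l"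
  by (induction l arbitrary: p) auto

lemma okall: "(\<forall>k\<in>{0..<d}. \<forall>u\<in>set lev. okw (xs ! k) u) \<longleftrightarrow> (\<forall>x. \<forall>u\<in>set lev. okw x u)"
proof -
  have ex: "\<And>x. \<exists>k<d. xs ! k = x" using xs_prop length_xs by (metis UNIV_I in_set_conv_nth)
  show ?thesis
  proof
    assume a: "\<forall>k\<in>{0..<d}. \<forall>u\<in>set lev. okw (xs ! k) u"
    show "\<forall>x. \<forall>u\<in>set lev. okw x u"
    proof (intro allI ballI)
      fix x u assume u: "u \<in> set lev"
      obtain k where "k < d" "xs ! k = x" using ex by blast
      then show "okw x u" using a u by auto
    qed
  qed auto
qed

lemma stp_funpow: "stp a c c' \<Longrightarrow> (ST ^^ (a + n)) c = (ST ^^ n) c'"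
proof -
  assume "stp a c c'"
  then have "(ST ^^ a) c = c'" by (simp add: stp_def)
  moreover have "(ST ^^ (a + n)) c = (ST ^^ n) ((ST ^^ a) c)"
    by (simp only: add.commute[of a n] funpow_add o_apply)
  ultimately show ?thesis by simp
qed

definition AA :: nat where "AA = 2 * N * (5 * d + 1)"

lemma level_arith:
  assumes "0 < m" "2 * N * m' \<le> (2 * N - 1) * m"
  shows "d * (2 * m + 3) + m' + AA * m' \<le> AA * m" "m' < m"
proof -
  have h1: "(5 * d + 1) * (2 * N * m') \<le> (5 * d + 1) * ((2 * N - 1) * m)"
    using assms(2) by (rule mult_le_mono2)
  have h2: "(2 * N - 1) * m + m = 2 * N * m" using Npos by (cases N) auto
  have h2': "(5 * d + 1) * ((2 * N - 1) * m) + (5 * d + 1) * m = (5 * d + 1) * (2 * N * m)"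
    using h2 by (metis distrib_left)
  have mm: "m' \<le> m"
  proof -
    have "2 * N * m' \<le> 2 * N * m" using assms(2) h2 by linarith
    then show ?thesis using Npos by simp
  qed
  have h3: "3 * d * 1 \<le> 3 * d * m" using assms(1) by (intro mult_le_mono2) simp
  have e3: "d * (2 * m + 3) = 2 * d * m + 3 * d" by (simp add: algebra_simps)
  have e4: "(5 * d + 1) * m = 2 * d * m + 3 * d * m + m" by (simp add: algebra_simps)
  have h4: "d * (2 * m + 3) + m' \<le> (5 * d + 1) * m" using h3 mm e3 e4 by linarith
  have e1: "AA * m' = (5 * d + 1) * (2 * N * m')" by (simp add: AA_def algebra_simps)
  have e2: "AA * m = (5 * d + 1) * (2 * N * m)" by (simp add: AA_def algebra_simps)
  show "d * (2 * m + 3) + m' + AA * m' \<le> AA * m" using h1 h2' h4 e1 e2 by linarith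
  show "m' < m"
  proof -
    have "2 * N * m' < 2 * N * m" using assms h2 by linarith
    then show ?thesis by simp
  qed
qed

lemma level:
  "\<forall>lev r t0 h0 tR s tW hW. length (encl lev) = m \<longrightarrow> tR (s - 1) = 2 \<longrightarrow> holds tR s (encl lev)
     \<longrightarrow> tR (s + int m) = 2 \<longrightarrow> tW (hW - 1) = 2 \<longrightarrow>
    ((\<forall>u\<in>set lev. AW u = id) \<longrightarrow>
        (\<exists>n\<le>AA * m + 2. fst ((ST ^^ n) (cfg r (RwA r 0) t0 h0 tR (s + int m) tW hW)) = to_nat (Acc :: ('s, 'x) ast)))
    \<and> (\<not> (\<forall>u\<in>set lev. AW u = id) \<longrightarrow> rejw (AA * m + 2) (cfg r (RwA r 0) t0 h0 tR (s + int m) tW hW))"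
proof (induction m rule: less_induct)
  case (less m)
  show ?case
  proof (intro allI impI)
    fix lev :: "'s list list" and r :: bool and t0 tR tW :: "int \<Rightarrow> nat" and h0 s hW :: int
    assume lm: "length (encl lev) = m" and m1: "tR (s - 1) = 2" and h: "holds tR s (encl lev)"
      and m2: "tR (s + int m) = 2" and w1: "tW (hW - 1) = 2"
    let ?c = "cfg r (RwA r 0) t0 h0 tR (s + int m) tW hW"
    have d0: "0 < d" by (rule d_pos)
    show "((\<forall>u\<in>set lev. AW u = id) \<longrightarrow> (\<exists>n\<le>AA * m + 2. fst ((ST ^^ n) ?c) = to_nat (Acc :: ('s, 'x) ast)))
      \<and> (\<not> (\<forall>u\<in>set lev. AW u = id) \<longrightarrow> rejw (AA * m + 2) ?c)"
    proof (cases "lev = []")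
      case True
      then have m0: "m = 0" using lm by simp
      have "stp 2 ?c (cfg r Acc t0 h0 tR (s - 1) tW hW)"
        using rewind_empty[where tR=tR and s=s, OF d0 m1, of r t0 h0 tW hW] m0 by simp
      then have "fst ((ST ^^ 2) ?c) = to_nat (Acc :: ('s, 'x) ast)" by (simp add: stp_def)
      then show ?thesis using True by (intro conjI impI exI[of _ 2]) auto
    next
      case False
      let ?lev' = "nextlev lev"
      let ?m' = "length (encl ?lev')"
      have mp: "0 < m" using encl_ne[OF False] lm by simp
      have ar: "d * (2 * m + 3) + ?m' + AA * ?m' \<le> AA * m" "?m' < m"
        using level_arith[OF mp] nextlev_len[of lev] lm by auto
      have O0: "Outs lev 0 = encl ?lev'" by (simp add: Outs_def nextlev_def)
      note LP = loop[where tR=tR and s=s, OF False m1 h, unfolded lm, OF m2 d0, of r t0 h0 tW hW]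
      let ?cost = "(d - 0) * (2 * m + 3) + length (Outs lev 0)"
      have cost: "?cost + (AA * ?m' + 2) \<le> AA * m + 2" using ar O0 by simp
      show ?thesis
      proof (cases "\<forall>x. \<forall>u\<in>set lev. okw x u")
        case True
        let ?tW' = "(wr tW hW (encl ?lev'))(hW + int ?m' := 2)"
        have st: "stp ?cost ?c (cfg (\<not> r) (RwA (\<not> r) 0) t0 h0 ?tW' (hW + int ?m') tR (s + int m + 1))"
          using LP True okall O0 by simp
        have c1: "?tW' (hW - 1) = 2" using w1 by (simp add: wr_below)
        have c2: "holds ?tW' hW (encl ?lev')" by (subst holds_upd_out) (auto simp: holds_wr)
        have c3: "?tW' (hW + int ?m') = 2" by simp
        have c4: "tR (s + int m + 1 - 1) = 2" using m2 by simp
        note IH = less[OF ar(2), THEN spec[of _ "?lev'"], THEN spec[of _ "\<not> r"], THEN spec[of _ t0],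
          THEN spec[of _ h0], THEN spec[of _ "?tW'"], THEN spec[of _ hW], THEN spec[of _ tR],
          THEN spec[of _ "s + int m + 1"], rule_format, OF refl c1 c2 c3 c4]
        have eqv: "(\<forall>u\<in>set lev. AW u = id) \<longleftrightarrow> (\<forall>v\<in>set ?lev'. AW v = id)" using lev_triv True by blast
        show ?thesis
        proof (intro conjI impI)
          assume a: "\<forall>u\<in>set lev. AW u = id"
          then obtain n where n: "n \<le> AA * ?m' + 2"
            "fst ((ST ^^ n) (cfg (\<not> r) (RwA (\<not> r) 0) t0 h0 ?tW' (hW + int ?m') tR (s + int m + 1))) = to_nat (Acc :: ('s, 'x) ast)"
            using IH eqv by blast
          have "(ST ^^ (?cost + n)) ?c = (ST ^^ n) (cfg (\<not> r) (RwA (\<not> r) 0) t0 h0 ?tW' (hW + int ?m') tR (s + int m + 1))"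
            by (rule stp_funpow[OF st])
          then show "\<exists>n\<le>AA * m + 2. fst ((ST ^^ n) ?c) = to_nat (Acc :: ('s, 'x) ast)"
            using n cost by (intro exI[of _ "?cost + n"]) auto
        next
          assume a: "\<not> (\<forall>u\<in>set lev. AW u = id)"
          then have "rejw (AA * ?m' + 2) (cfg (\<not> r) (RwA (\<not> r) 0) t0 h0 ?tW' (hW + int ?m') tR (s + int m + 1))"
            using IH eqv by blast
          from rej_trans[OF st this] show "rejw (AA * m + 2) ?c" by (rule rej_mono) (rule cost)
        qed
      next
        case False
        have r: "rejw ?cost ?c" using LP False okall by simp
        have nt: "\<not> (\<forall>u\<in>set lev. AW u = id)" using lev_triv False by blast
        have "rejw (AA * m + 2) ?c" by (rule rej_mono[OF r]) (use cost in linarith)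
        then show ?thesis using nt by blast
      qed
    qed
  qed
qed

end


lemma holds_iff: "holds t p l \<longleftrightarrow> (\<forall>j<length l. t (p + int j) = l ! j)"
proof (induction l arbitrary: p)
  case Nil then show ?case by simp
next
  case (Cons a l)
  show ?case
  proof
    assume h: "holds t p (a # l)"
    show "\<forall>j<length (a # l). t (p + int j) = (a # l) ! j"
    proof (intro allI impI)
      fix j assume j: "j < length (a # l)"
      show "t (p + int j) = (a # l) ! j"
      proof (cases j)
        case 0 then show ?thesis using h by simp
      next
        case (Suc k)
        then have "t ((p + 1) + int k) = l ! k" using h j Cons[of "p + 1"] by simp
        then show ?thesis using Suc by (simp add: algebra_simps)
      qed
    qed
  next
    assume h: "\<forall>j<length (a # l). t (p + int j) = (a # l) ! j"
    have "t p = a" using h[rule_format, of 0] by simp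
    moreover have "\<forall>j<length l. t ((p + 1) + int j) = l ! j"
    proof (intro allI impI)
      fix j assume "j < length l"
      then show "t ((p + 1) + int j) = l ! j" using h[rule_format, of "Suc j"] by (simp add: algebra_simps)
    qed
    ultimately show "holds t p (a # l)" using Cons[of "p + 1"] by simp
  qed
qed

context SC
begin

lemma sym_pos[simp]: "0 < sym a" by (simp add: sym_def)

lemma tInit: "ST (cfg True (Init :: ('s, 'x) ast) t0 h0 tR hR tW hW) = cfg True (Copy :: ('s, 'x) ast) t0 h0 (tR(hR := 2)) (hR + 1) (tW(hW := 2)) (hW + 1)"
  by (subst step_cfg[where q'="Copy"]) (auto simp: fun_upd_idem adelta_def)

lemma tC1: "t0 h0 \<noteq> 0 \<Longrightarrow> ST (cfg True (Copy :: ('s, 'x) ast) t0 h0 tR hR tW hW) = cfg True (Copy :: ('s, 'x) ast) t0 (h0 + 1) (tR(hR := t0 h0)) (hR + 1) tW hW"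
  by (subst step_cfg[where q'="Copy"]) (auto simp: fun_upd_idem adelta_def)

lemma tC2: "t0 h0 = 0 \<Longrightarrow> ST (cfg True (Copy :: ('s, 'x) ast) t0 h0 tR hR tW hW) = cfg True (CopyEnd :: ('s, 'x) ast) t0 h0 (tR(hR := 1)) (hR + 1) tW hW"
  by (subst step_cfg[where q'="CopyEnd"]) (auto simp: fun_upd_idem adelta_def)

lemma tCE: "ST (cfg True (CopyEnd :: ('s, 'x) ast) t0 h0 tR hR tW hW) = cfg True (RwA True 0) t0 h0 (tR(hR := 2)) hR tW hW"
  by (subst step_cfg[where q'="RwA True 0"]) (auto simp: fun_upd_idem adelta_def d_pos)

lemma copy: "holds t0 h0 (map sym v) \<Longrightarrow> t0 (h0 + int (length v)) = 0 \<Longrightarrow>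
  stp (length v + 1) (cfg True (Copy :: ('s, 'x) ast) t0 h0 tR hR tW hW)
    (cfg True (CopyEnd :: ('s, 'x) ast) t0 (h0 + int (length v)) (wr tR hR (map sym v @ [1])) (hR + int (length v) + 1) tW hW)"
proof (induction v arbitrary: h0 tR hR)
  case Nil
  then show ?case using tC2[of t0 h0 tR hR tW hW] by (simp add: stp_def fun_upd_def)
next
  case (Cons a v)
  have 1: "stp 1 (cfg True (Copy :: ('s, 'x) ast) t0 h0 tR hR tW hW) (cfg True (Copy :: ('s, 'x) ast) t0 (h0 + 1) (tR(hR := sym a)) (hR + 1) tW hW)"
    using tC1[of t0 h0 tR hR tW hW] Cons.prems by (intro stp_1) simp
  have 2: "stp (length v + 1) (cfg True (Copy :: ('s, 'x) ast) t0 (h0 + 1) (tR(hR := sym a)) (hR + 1) tW hW)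
    (cfg True (CopyEnd :: ('s, 'x) ast) t0 (h0 + 1 + int (length v)) (wr (tR(hR := sym a)) (hR + 1) (map sym v @ [1])) (hR + 1 + int (length v) + 1) tW hW)"
    by (rule Cons.IH) (use Cons.prems in \<open>auto simp: algebra_simps\<close>)
  show ?case by (rule stp_eq[OF stp_trans[OF 1 2]]) (simp_all add: algebra_simps)
qed

lemma M_simps: "tm_enc M = sym" "tm_k M = 3" "tm_start M = to_nat (Init :: ('s, 'x) ast)"
  "tm_acc M = {to_nat (Acc :: ('s, 'x) ast)}" "tm_rej M = {to_nat (Rej :: ('s, 'x) ast)}"
  by (simp_all add: M_def)

definition CC :: nat where "CC = AA + 5"

lemma decides: "decides_in_time M (word_problem tr outp) (\<lambda>n. CC * n + CC)"
  unfolding decides_in_time_def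
proof
  fix w :: "'s list"
  let ?n = "length w"
  define t0 where "t0 = (\<lambda>i. if 0 \<le> i \<and> i < int ?n then sym (w ! nat i) else 0)"
  let ?Z = "(\<lambda>_. 0) :: int \<Rightarrow> nat"
  have init: "tm_init M w = cfg True (Init :: ('s, 'x) ast) t0 0 ?Z 0 ?Z 0"
    unfolding tm_init_def M_simps cfg_def t0_def by (simp add: numeral_2_eq_2 numeral_3_eq_3)
  let ?Z1 = "?Z(0 := 2)"
  have 1: "stp 1 (cfg True (Init :: ('s, 'x) ast) t0 0 ?Z 0 ?Z 0) (cfg True (Copy :: ('s, 'x) ast) t0 0 ?Z1 1 ?Z1 1)"
    using tInit[of t0 0 ?Z 0 ?Z 0] by (intro stp_1) simp
  have ht: "holds t0 0 (map sym w)" by (simp add: holds_iff t0_def)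
  have te: "t0 (0 + int ?n) = 0" by (simp add: t0_def)
  let ?tR1 = "wr ?Z1 1 (map sym w @ [1])"
  have 2: "stp (?n + 1) (cfg True (Copy :: ('s, 'x) ast) t0 0 ?Z1 1 ?Z1 1)
      (cfg True (CopyEnd :: ('s, 'x) ast) t0 (int ?n) ?tR1 (int ?n + 2) ?Z1 1)"
    using copy[OF ht te, of ?Z1 1 ?Z1 1] by (simp add: algebra_simps)
  let ?tR2 = "?tR1(int ?n + 2 := 2)"
  have 3: "stp 1 (cfg True (CopyEnd :: ('s, 'x) ast) t0 (int ?n) ?tR1 (int ?n + 2) ?Z1 1)
      (cfg True (RwA True 0) t0 (int ?n) ?tR2 (int ?n + 2) ?Z1 1)"
    by (intro stp_1 tCE)
  note s123 = stp_trans[OF stp_trans[OF 1 2] 3]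
  have el: "length (encl [w]) = ?n + 1" by simp
  have c1: "?tR2 (1 - 1) = 2" by (simp add: wr_below)
  have c2: "holds ?tR2 1 (encl [w])" by (subst holds_upd_out) (auto simp: holds_wr)
  have c3: "?tR2 (1 + int (?n + 1)) = 2" by simp
  have c4: "?Z1 (1 - 1) = 2" by simp
  have pe: "int ?n + 2 = 1 + int (?n + 1)" by simp
  note LV = level[THEN spec[of _ "[w]"], THEN spec[of _ True], THEN spec[of _ t0], THEN spec[of _ "int ?n"],
      THEN spec[of _ ?tR2], THEN spec[of _ 1], THEN spec[of _ ?Z1], THEN spec[of _ 1], rule_format,
      OF el c1 c2 c3 c4]
  let ?c3 = "cfg True (RwA True 0) t0 (int ?n) ?tR2 (1 + int (?n + 1)) ?Z1 1"
  have s123': "stp (1 + (?n + 1) + 1) (tm_init M w) ?c3"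
    unfolding init by (rule stp_eq[OF s123]) (simp_all only: pe)
  have wp: "w \<in> word_problem tr outp \<longleftrightarrow> (\<forall>u\<in>set [w]. AW u = id)" by (simp add: word_problem_def)
  have bnd: "1 + (?n + 1) + 1 + (AA * (?n + 1) + 2) \<le> CC * ?n + CC" by (simp add: CC_def algebra_simps)
  have AccRej: "to_nat (Acc :: ('s, 'x) ast) \<noteq> to_nat (Rej :: ('s, 'x) ast)" by simp
  show "\<exists>n\<le>CC * ?n + CC. let q = fst ((tm_step M ^^ n) (tm_init M w)) in
      q \<in> tm_acc M \<union> tm_rej M \<and> (q \<in> tm_acc M \<longleftrightarrow> w \<in> word_problem tr outp)"
  proof (cases "\<forall>u\<in>set [w]. AW u = id")
    case True
    then obtain k where k: "k \<le> AA * (?n + 1) + 2" "fst ((ST ^^ k) ?c3) = to_nat (Acc :: ('s, 'x) ast)"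
      using LV by blast
    have "(ST ^^ (1 + (?n + 1) + 1 + k)) (tm_init M w) = (ST ^^ k) ?c3" by (rule stp_funpow[OF s123'])
    then show ?thesis using k bnd True wp
      by (intro exI[of _ "1 + (?n + 1) + 1 + k"]) (auto simp: M_simps Let_def)
  next
    case False
    then have "rejw (AA * (?n + 1) + 2) ?c3" using LV by blast
    from rej_trans[OF s123' this] obtain k where k: "k \<le> 1 + (?n + 1) + 1 + (AA * (?n + 1) + 2)"
      "fst ((ST ^^ k) (tm_init M w)) = to_nat (Rej :: ('s, 'x) ast)" unfolding rejw_def by blast
    show ?thesis using k bnd False wp AccRej
      by (intro exI[of _ k]) (auto simp: M_simps Let_def)
  qed
qed

lemma dtime: "DTIME_lin (word_problem tr outp)"
  unfolding DTIME_lin_def using wf_M decides by blast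

end


theorem mainTheorem8:
  fixes tr :: "'s::finite \<Rightarrow> 'x::finite \<Rightarrow> 's"
    and outp :: "'s \<Rightarrow> 'x \<Rightarrow> 'x"
  assumes "invertible_automaton tr outp"
    and "minimal_automaton tr outp"
    and "inverse_closed_automaton tr outp"
    and "strongly_contracting_automaton tr outp"
  shows "DTIME_lin (word_problem tr outp)"
proof -
  from assms(4) obtain N0 where N0: "\<forall>w. N0 \<le> length w \<longrightarrow>
      (\<Sum>x\<in>UNIV. len_S tr outp (section_word tr outp w x)) < length w"
    unfolding strongly_contracting_automaton_def by blast
  interpret SC tr outp "max N0 1"
  proof
    show "\<And>s. bij (outp s)" using assms(1) unfolding invertible_automaton_def by blast
    show "0 < max N0 1" by simp
    fix w :: "'s list" assume "length w = max N0 1"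
    then show "(\<Sum>x\<in>UNIV. len_S tr outp (section_word tr outp w x)) < max N0 1"
      using N0 by (metis max.cobounded1)
  qed
  show ?thesis by (rule dtime)
qed

end
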